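(* Fix $L\in\{2,3,\ldots\}$, $a>200L$, and an integer $M>L^2$ with $1-\sum_{m=M}^\infty m^{-2}\ge0.9$ and $M^2\ge2^{14}$. For $m\ge M$ let $\theta_m=1-\sum_{k=M}^m k^{-2}$, let $r_m$ be the unique integer with $m^2\le L^{r_m}<Lm^2$, and let $R_m=M+\sum_{i=M}^m r_i$. Let $m\ge M$, $q\in[0,1]$, and let $J$ be an isometry-invariant kernel on $\mathbb{H}^1_L$ such that $J(L^n)\ge aL^{-2n+1}\log n$ for all $n>R_m$. Then \[\mathbb{P}_{q,J}(\Lambda_{R_{m+1}}(0)\text{ is bad})\le L^2(m+1)^4\,\mathbb{P}_{q,J}(\Lambda_{R_m}(0)\text{ is bad})^2+(m+1)^2L^3m^{-\frac{a}{10L}}.\]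
   Context: $\mathbb{H}^1_L$ is the group $\bigoplus_{i=1}^\infty\mathbb{Z}/L\mathbb{Z}$ with ultrametric $\|x-y\|=L^{\max\{i:x_i\neq y_i\}}$ for $x\neq y$; $\Lambda_n(u)$ is the ball of radius $L^n$ around $u$ (an $n$-block, of cardinality $L^n$). Edges are unordered pairs of distinct vertices, $|e|=\|x-y\|$; an isometry-invariant kernel ($J(e)$ depending only on $|e|$) is written as a function $J(L^n)$ of the edge length. $\mathbb{P}_{q,J}$ is the law of the random graph in which each vertex is open independently with probability $q$ and, independently, each edge between open vertices is open with probability $1-\exp(-J(e))$. For $A\subseteq\mathbb{H}^1_L$, the clusters inside $A$ are the connected components formed by open vertices of $A$ using open edges with both endpoints in $A$; $K_{\max}(A)$ denotes a largest such cluster (ties broken by a deterministic rule depending only on the configuration inside $A$). A block $\Lambda_{R_m}(u)$ is good if $|K_{\max}(\Lambda_{R_m}(u))|\ge\theta_m|\Lambda_{R_m}(u)|$, and bad otherwise. *)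

theory Defs
  imports "HOL-Analysis.Analysis" "HOL-Probability.Probability"
begin

text \<open>The hierarchical lattice H^1_L: sequences x :: nat => nat with entries in {0..L-1},
  index 0 unused (always 0), finitely many nonzero entries (coordinates i = 1,2,...).\<close>
definition hier :: "nat \<Rightarrow> (nat \<Rightarrow> nat) set" where
  "hier L = {x. (\<forall>i. x i < L) \<and> x 0 = 0 \<and> finite {i. x i \<noteq> 0}}"

text \<open>The n-block Lambda_n(u): ball of radius L^n around u, i.e. points agreeing with u
  in all coordinates i > n.\<close>
definition block :: "nat \<Rightarrow> nat \<Rightarrow> (nat \<Rightarrow> nat) \<Rightarrow> (nat \<Rightarrow> nat) set" where
  "block L n u = {x \<in> hier L. \<forall>i>n. x i = u i}"

definition edges_in :: "(nat \<Rightarrow> nat) set \<Rightarrow> (nat \<Rightarrow> nat) set set" where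
  "edges_in A = {e. \<exists>x\<in>A. \<exists>y\<in>A. x \<noteq> y \<and> e = {x, y}}"

text \<open>Edge level: |e| = L ^ (edge_level e), where edge_level = max index of disagreement.\<close>
definition edge_level :: "(nat \<Rightarrow> nat) set \<Rightarrow> nat" where
  "edge_level e = Max {i. \<exists>x\<in>e. \<exists>y\<in>e. x i \<noteq> y i}"

text \<open>Law of the configuration restricted to the finite set A (vertex states, edge states);
  J n is the kernel value at edge length L^n.  Edge variables are sampled for all edges in A;
  an edge is effectively open iff it is open and both endpoints are open, which gives exactly
  the marginal of P_{q,J} on the configuration inside A.\<close>
definition config_pmf ::
  "real \<Rightarrow> (nat \<Rightarrow> real) \<Rightarrow> (nat \<Rightarrow> nat) set
     \<Rightarrow> (((nat \<Rightarrow> nat) \<Rightarrow> bool) \<times> ((nat \<Rightarrow> nat) set \<Rightarrow> bool)) pmf" where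
  "config_pmf q J A =
     pair_pmf (Pi_pmf A False (\<lambda>_. bernoulli_pmf q))
              (Pi_pmf (edges_in A) False (\<lambda>e. bernoulli_pmf (1 - exp (- J (edge_level e)))))"

definition adj :: "(nat \<Rightarrow> nat) set \<Rightarrow> ((nat \<Rightarrow> nat) \<Rightarrow> bool) \<Rightarrow> ((nat \<Rightarrow> nat) set \<Rightarrow> bool)
                    \<Rightarrow> ((nat \<Rightarrow> nat) \<times> (nat \<Rightarrow> nat)) set" where
  "adj A \<sigma> \<omega> = {(x, y). x \<in> A \<and> y \<in> A \<and> x \<noteq> y \<and> \<sigma> x \<and> \<sigma> y \<and> \<omega> {x, y}}"

definition cluster :: "(nat \<Rightarrow> nat) set \<Rightarrow> ((nat \<Rightarrow> nat) \<Rightarrow> bool) \<Rightarrow> ((nat \<Rightarrow> nat) set \<Rightarrow> bool)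
                    \<Rightarrow> (nat \<Rightarrow> nat) \<Rightarrow> (nat \<Rightarrow> nat) set" where
  "cluster A \<sigma> \<omega> x = {y. (x, y) \<in> (adj A \<sigma> \<omega>)\<^sup>*}"

definition kmax_size :: "(nat \<Rightarrow> nat) set \<Rightarrow> ((nat \<Rightarrow> nat) \<Rightarrow> bool) \<Rightarrow> ((nat \<Rightarrow> nat) set \<Rightarrow> bool) \<Rightarrow> nat" where
  "kmax_size A \<sigma> \<omega> = Max (insert 0 {card (cluster A \<sigma> \<omega> x) | x. x \<in> A \<and> \<sigma> x})"

definition theta :: "nat \<Rightarrow> nat \<Rightarrow> real" where
  "theta M m = 1 - (\<Sum>k=M..m. 1 / (real k)^2)"

text \<open>r_m: the unique integer with m^2 \<le> L^r < L m^2 (it is nonnegative since m \<ge> 1).\<close>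
definition r_scale :: "nat \<Rightarrow> nat \<Rightarrow> nat" where
  "r_scale L m = (THE r::nat. m^2 \<le> L^r \<and> L^r < L * m^2)"

definition R_scale :: "nat \<Rightarrow> nat \<Rightarrow> nat \<Rightarrow> nat" where
  "R_scale L M m = M + (\<Sum>i=M..m. r_scale L i)"

definition prob_bad :: "nat \<Rightarrow> nat \<Rightarrow> real \<Rightarrow> (nat \<Rightarrow> real) \<Rightarrow> nat \<Rightarrow> real" where
  "prob_bad L M q J m =
    (let A = block L (R_scale L M m) (\<lambda>_. 0) in
     measure_pmf.prob (config_pmf q J A)
       {(\<sigma>, \<omega>). real (kmax_size A \<sigma> \<omega>) < theta M m * real (card A)})"

end

theory Submission
  imports Defs
begin

lemma Pi_pmf_split2:
  fixes A :: "'a set" and d :: 'b and p :: "'a \<Rightarrow> 'b pmf"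
  assumes "finite A" "B1 \<subseteq> A" "B2 \<subseteq> A" "B1 \<inter> B2 = {}"
  shows "map_pmf (\<lambda>f. (\<lambda>x. if x \<in> B1 then f x else d, \<lambda>x. if x \<in> B2 then f x else d)) (Pi_pmf A d p)
       = pair_pmf (Pi_pmf B1 d p) (Pi_pmf B2 d p)"
proof -
  define F :: "('a \<Rightarrow> 'b) \<Rightarrow> ('a \<Rightarrow> 'b) \<times> ('a \<Rightarrow> 'b)" where "F = (\<lambda>f. (\<lambda>x. if x \<in> B1 then f x else d, \<lambda>x. if x \<in> B2 then f x else d))"
  define G :: "('a \<Rightarrow> 'b) \<times> ('a \<Rightarrow> 'b) \<Rightarrow> 'a \<Rightarrow> 'b" where "G = (\<lambda>(f,g) x. if x \<in> B1 then f x else g x)"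
  define U :: "('a \<Rightarrow> 'b) \<Rightarrow> 'a \<Rightarrow> 'b" where "U = (\<lambda>f x. if x \<in> B1 \<union> B2 then f x else d)"
  have f1: "finite B1" "finite B2" using assms finite_subset by blast+
  have "Pi_pmf (B1 \<union> B2) d p = map_pmf U (Pi_pmf A d p)"
    unfolding U_def using assms by (intro Pi_pmf_subset) auto
  moreover have "Pi_pmf (B1 \<union> B2) d p = map_pmf G (pair_pmf (Pi_pmf B1 d p) (Pi_pmf B2 d p))"
    unfolding G_def using f1 assms by (intro Pi_pmf_union) auto
  ultimately have eq: "map_pmf U (Pi_pmf A d p) = map_pmf G (pair_pmf (Pi_pmf B1 d p) (Pi_pmf B2 d p))" by simp
  have FU: "F (U f) = F f" for f unfolding F_def U_def by (auto simp: fun_eq_iff)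
  have FG: "F (G z) = z" if z: "z \<in> set_pmf (pair_pmf (Pi_pmf B1 d p) (Pi_pmf B2 d p))" for z
  proof -
    obtain f g where zfg: "z = (f,g)" by (cases z)
    have "f \<in> set_pmf (Pi_pmf B1 d p)" "g \<in> set_pmf (Pi_pmf B2 d p)" using z zfg by auto
    then have "\<forall>x. x \<notin> B1 \<longrightarrow> f x = d" "\<forall>x. x \<notin> B2 \<longrightarrow> g x = d"
      using set_Pi_pmf_subset[OF f1(1), of d p] set_Pi_pmf_subset[OF f1(2), of d p] by blast+
    then show ?thesis unfolding zfg F_def G_def using assms(4) by (auto simp: fun_eq_iff)
  qed
  have "map_pmf F (Pi_pmf A d p) = map_pmf F (map_pmf U (Pi_pmf A d p))"
    by (simp add: map_pmf_comp FU)
  also have "\<dots> = map_pmf F (map_pmf G (pair_pmf (Pi_pmf B1 d p) (Pi_pmf B2 d p)))"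
    by (simp only: eq)
  also have "\<dots> = map_pmf (\<lambda>z. z) (pair_pmf (Pi_pmf B1 d p) (Pi_pmf B2 d p))"
    unfolding map_pmf_comp by (intro map_pmf_cong refl) (simp add: FG)
  finally show ?thesis unfolding F_def by simp
qed

lemma Pi_pmf_reindex_inv:
  fixes h :: "'a \<Rightarrow> 'a" and p p' :: "'a \<Rightarrow> 'b pmf"
  assumes "finite B" "\<And>x. h (h x) = x" "\<And>x. x \<in> B \<Longrightarrow> p' (h x) = p x"
  shows "Pi_pmf (h ` B) d p' = map_pmf (\<lambda>g. g \<circ> h) (Pi_pmf B d p)"
proof (rule pmf_eqI)
  fix f :: "'a \<Rightarrow> 'b"
  have injh: "inj h" by (metis assms(2) injI)
  have injc: "inj (\<lambda>g::'a \<Rightarrow> 'b. g \<circ> h)"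
    by (rule injI) (metis assms(2) comp_apply fun_eq_iff)
  have ff: "f = (f \<circ> h) \<circ> h" using assms(2) by (simp add: fun_eq_iff)
  have "pmf (map_pmf (\<lambda>g. g \<circ> h) (Pi_pmf B d p)) ((f \<circ> h) \<circ> h) = pmf (Pi_pmf B d p) (f \<circ> h)"
    by (rule pmf_map_inj'[OF injc])
  then have 1: "pmf (map_pmf (\<lambda>g. g \<circ> h) (Pi_pmf B d p)) f = pmf (Pi_pmf B d p) (f \<circ> h)"
    using ff by simp
  have c: "(\<forall>x. x \<notin> B \<longrightarrow> (f \<circ> h) x = d) \<longleftrightarrow> (\<forall>y. y \<notin> h ` B \<longrightarrow> f y = d)"
    by (auto simp: image_iff) (metis assms(2))+
  have pr: "(\<Prod>x\<in>B. pmf (p x) ((f \<circ> h) x)) = (\<Prod>y\<in>h ` B. pmf (p' y) (f y))"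
    by (subst prod.reindex) (auto intro: inj_on_subset[OF injh] simp: assms(3))
  have "pmf (Pi_pmf B d p) (f \<circ> h) = (if (\<forall>x. x \<notin> B \<longrightarrow> (f \<circ> h) x = d) then \<Prod>x\<in>B. pmf (p x) ((f \<circ> h) x) else 0)"
    by (rule pmf_Pi[OF assms(1)])
  also have "\<dots> = (if (\<forall>y. y \<notin> h ` B \<longrightarrow> f y = d) then \<Prod>y\<in>h ` B. pmf (p' y) (f y) else 0)"
    by (simp only: c pr)
  also have "\<dots> = pmf (Pi_pmf (h ` B) d p') f"
    by (rule pmf_Pi[symmetric]) (simp add: assms(1))
  finally show "pmf (Pi_pmf (h ` B) d p') f = pmf (map_pmf (\<lambda>g. g \<circ> h) (Pi_pmf B d p)) f"
    using 1 by simp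
qed

lemma prob_pair_times:
  "measure_pmf.prob (pair_pmf P Q) (S \<times> T) = measure_pmf.prob P S * measure_pmf.prob Q T"
proof -
  have e: "(S \<times> T) \<inter> set_pmf (pair_pmf P Q) = (S \<inter> set_pmf P) \<times> (T \<inter> set_pmf Q)" by auto
  have "measure_pmf.prob (pair_pmf P Q) (S \<times> T) = measure_pmf.prob (pair_pmf P Q) ((S \<inter> set_pmf P) \<times> (T \<inter> set_pmf Q))"
    by (simp only: measure_Int_set_pmf[symmetric, of "pair_pmf P Q" "S \<times> T"] e)
  also have "\<dots> = measure_pmf.prob P (S \<inter> set_pmf P) * measure_pmf.prob Q (T \<inter> set_pmf Q)"
    by (rule measure_pmf_prob_product; rule countable_subset[OF _ countable_set_pmf]; blast)
  also have "\<dots> = measure_pmf.prob P S * measure_pmf.prob Q T"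
    by (simp add: measure_Int_set_pmf)
  finally show ?thesis .
qed

lemma prob_pair_le:
  assumes "\<And>a. a \<in> S \<Longrightarrow> measure_pmf.prob Q (T a) \<le> \<beta>" "\<beta> \<ge> 0"
  shows "measure_pmf.prob (pair_pmf P Q) {(a,b). a \<in> S \<and> b \<in> T a} \<le> \<beta>"
proof -
  let ?X = "{(a,b). a \<in> S \<and> b \<in> T a}"
  have sl: "(\<integral>\<^sup>+b. indicator ?X (a,b) \<partial>Q) \<le> ennreal \<beta>" for a
  proof (cases "a \<in> S")
    case True
    have "(\<integral>\<^sup>+b. indicator ?X (a,b) \<partial>Q) = (\<integral>\<^sup>+b. indicator (T a) b \<partial>Q)"
      using True by (intro nn_integral_cong) (auto simp: indicator_def)
    also have "\<dots> = emeasure Q (T a)" by simp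
    also have "\<dots> = ennreal (measure_pmf.prob Q (T a))" by (simp add: measure_pmf.emeasure_eq_measure)
    also have "\<dots> \<le> ennreal \<beta>" using assms(1)[OF True] by (rule ennreal_leI)
    finally show ?thesis .
  next
    case False
    have "(\<integral>\<^sup>+b. indicator ?X (a,b) \<partial>Q) = (\<integral>\<^sup>+b. 0 \<partial>Q)"
      using False by (intro nn_integral_cong) (auto simp: indicator_def)
    then show ?thesis by simp
  qed
  have "emeasure (measure_pmf (pair_pmf P Q)) ?X = (\<integral>\<^sup>+x. indicator ?X x \<partial>pair_pmf P Q)"
    by simp
  also have "\<dots> = (\<integral>\<^sup>+a. \<integral>\<^sup>+b. indicator ?X (a,b) \<partial>Q \<partial>P)"
    by (rule nn_integral_pair_pmf')
  also have "\<dots> \<le> (\<integral>\<^sup>+a. ennreal \<beta> \<partial>P)"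
    by (intro nn_integral_mono sl)
  also have "\<dots> = ennreal \<beta>" by (simp add: measure_pmf.emeasure_space_1)
  finally have "ennreal (measure_pmf.prob (pair_pmf P Q) ?X) \<le> ennreal \<beta>"
    by (simp add: measure_pmf.emeasure_eq_measure)
  then show ?thesis using assms(2) by simp
qed

lemma prob_Pi_all_false:
  assumes "finite W" "E \<subseteq> W" "\<And>e. e \<in> W \<Longrightarrow> 0 \<le> p e \<and> p e \<le> 1"
  shows "measure_pmf.prob (Pi_pmf W False (\<lambda>e. bernoulli_pmf (p e))) {f. \<forall>e\<in>E. \<not> f e}
         = (\<Prod>e\<in>E. (1 - p e))"
proof -
  let ?P = "Pi_pmf W False (\<lambda>e. bernoulli_pmf (p e))"
  let ?B = "\<lambda>e. if e \<in> E then {False} else UNIV"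
  have sub: "set_pmf ?P \<subseteq> {f. \<forall>x. x \<notin> W \<longrightarrow> f x = False}"
    by (rule set_Pi_pmf_subset[OF assms(1)])
  have eq: "{f. \<forall>e\<in>E. \<not> f e} \<inter> set_pmf ?P = PiE_dflt W False ?B \<inter> set_pmf ?P"
    using sub assms(2) unfolding PiE_dflt_def by auto
  have "measure_pmf.prob ?P {f. \<forall>e\<in>E. \<not> f e} = measure_pmf.prob ?P (PiE_dflt W False ?B)"
  proof -
    have "measure_pmf.prob ?P {f. \<forall>e\<in>E. \<not> f e} = measure_pmf.prob ?P ({f. \<forall>e\<in>E. \<not> f e} \<inter> set_pmf ?P)"
      by (rule measure_Int_set_pmf[symmetric])
    also have "\<dots> = measure_pmf.prob ?P (PiE_dflt W False ?B \<inter> set_pmf ?P)" by (simp only: eq)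
    also have "\<dots> = measure_pmf.prob ?P (PiE_dflt W False ?B)" by (rule measure_Int_set_pmf)
    finally show ?thesis .
  qed
  also have "\<dots> = (\<Prod>e\<in>W. measure_pmf.prob (bernoulli_pmf (p e)) (?B e))"
    by (rule measure_Pi_pmf_PiE_dflt[OF assms(1)])
  also have "\<dots> = (\<Prod>e\<in>W. if e \<in> E then 1 - p e else 1)"
  proof (intro prod.cong refl)
    fix e assume e: "e \<in> W"
    show "measure_pmf.prob (bernoulli_pmf (p e)) (?B e) = (if e \<in> E then 1 - p e else 1)"
    proof (cases "e \<in> E")
      case True
      then show ?thesis using assms(3)[OF e] by (simp add: measure_pmf_single)
    next
      case False
      then show ?thesis by simp
    qed
  qed
  also have "\<dots> = (\<Prod>e\<in>E. (1 - p e))"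
    using assms(1,2) by (simp add: prod.If_cases Int_absorb1)
  finally show ?thesis .
qed


definition restr :: "'a set \<Rightarrow> ('a \<Rightarrow> bool) \<Rightarrow> 'a \<Rightarrow> bool" where
  "restr B f = (\<lambda>x. if x \<in> B then f x else False)"

definition vpmf :: "real \<Rightarrow> (nat \<Rightarrow> nat) set \<Rightarrow> ((nat \<Rightarrow> nat) \<Rightarrow> bool) pmf" where
  "vpmf q A = Pi_pmf A False (\<lambda>_. bernoulli_pmf q)"

definition epr :: "(nat \<Rightarrow> real) \<Rightarrow> (nat \<Rightarrow> nat) set \<Rightarrow> bool pmf" where
  "epr J e = bernoulli_pmf (1 - exp (- J (edge_level e)))"

lemma config_pmf_alt: "config_pmf q J A = pair_pmf (vpmf q A) (Pi_pmf (edges_in A) False (epr J))"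
  unfolding config_pmf_def vpmf_def epr_def by simp

lemma finite_edges_in: "finite A \<Longrightarrow> finite (edges_in A)"
proof -
  assume "finite A"
  have "edges_in A \<subseteq> (\<lambda>(x,y). {x,y}) ` (A \<times> A)" unfolding edges_in_def by auto
  then show ?thesis using \<open>finite A\<close> by (meson finite_SigmaI finite_imageI finite_subset)
qed

lemma edges_in_mono: "B \<subseteq> A \<Longrightarrow> edges_in B \<subseteq> edges_in A"
  unfolding edges_in_def by blast

lemma edges_in_disj: "B1 \<inter> B2 = {} \<Longrightarrow> edges_in B1 \<inter> edges_in B2 = {}"
  unfolding edges_in_def by (auto simp: doubleton_eq_iff)

lemma pair_rearr_pmf:
  fixes A :: "'a pmf" and B :: "'b pmf" and C :: "'c pmf" and D :: "'d pmf"
  shows "map_pmf (\<lambda>((a,b),(c,d)). ((a,c),(b,d))) (pair_pmf (pair_pmf A B) (pair_pmf C D))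
   = pair_pmf (pair_pmf A C) (pair_pmf B D)"
proof (rule pmf_eqI)
  fix z :: "('a \<times> 'c) \<times> ('b \<times> 'd)"
  obtain a c b d where z: "z = ((a,c),(b,d))" by (metis prod.collapse)
  have inj: "inj (\<lambda>((a::'a,b::'b),(c::'c,d::'d)). ((a,c),(b,d)))"
    by (auto simp: inj_def)
  have "pmf (map_pmf (\<lambda>((a,b),(c,d)). ((a,c),(b,d))) (pair_pmf (pair_pmf A B) (pair_pmf C D)))
          ((\<lambda>((a,b),(c,d)). ((a,c),(b,d))) ((a,b),(c,d)))
        = pmf (pair_pmf (pair_pmf A B) (pair_pmf C D)) ((a,b),(c,d))"
    by (rule pmf_map_inj'[OF inj])
  then show "pmf (map_pmf (\<lambda>((a,b),(c,d)). ((a,c),(b,d))) (pair_pmf (pair_pmf A B) (pair_pmf C D))) z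
       = pmf (pair_pmf (pair_pmf A C) (pair_pmf B D)) z"
    unfolding z by (simp add: pmf_pair)
qed

lemma config_split2:
  assumes "finite A" "B1 \<subseteq> A" "B2 \<subseteq> A" "B1 \<inter> B2 = {}"
  shows "map_pmf (\<lambda>(\<sigma>,\<omega>). ((restr B1 \<sigma>, restr (edges_in B1) \<omega>), (restr B2 \<sigma>, restr (edges_in B2) \<omega>)))
           (config_pmf q J A) = pair_pmf (config_pmf q J B1) (config_pmf q J B2)"
proof -
  have V: "map_pmf (\<lambda>f. (restr B1 f, restr B2 f)) (vpmf q A) = pair_pmf (vpmf q B1) (vpmf q B2)"
    unfolding vpmf_def restr_def by (rule Pi_pmf_split2[OF assms])
  have E: "map_pmf (\<lambda>f. (restr (edges_in B1) f, restr (edges_in B2) f)) (Pi_pmf (edges_in A) False (epr J))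
     = pair_pmf (Pi_pmf (edges_in B1) False (epr J)) (Pi_pmf (edges_in B2) False (epr J))"
    unfolding restr_def
    by (rule Pi_pmf_split2[OF finite_edges_in[OF assms(1)] edges_in_mono[OF assms(2)]
          edges_in_mono[OF assms(3)] edges_in_disj[OF assms(4)]])
  have "map_pmf (\<lambda>(\<sigma>,\<omega>). ((restr B1 \<sigma>, restr (edges_in B1) \<omega>), (restr B2 \<sigma>, restr (edges_in B2) \<omega>)))
           (config_pmf q J A) =
        map_pmf (\<lambda>((a,b),(c,d)). ((a,c),(b,d)))
          (map_pmf (\<lambda>(\<sigma>,\<omega>). ((restr B1 \<sigma>, restr B2 \<sigma>), (restr (edges_in B1) \<omega>, restr (edges_in B2) \<omega>)))
            (pair_pmf (vpmf q A) (Pi_pmf (edges_in A) False (epr J))))"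
    unfolding config_pmf_alt map_pmf_comp by (intro map_pmf_cong refl) auto
  also have "\<dots> = map_pmf (\<lambda>((a,b),(c,d)). ((a,c),(b,d))) (pair_pmf
       (map_pmf (\<lambda>f. (restr B1 f, restr B2 f)) (vpmf q A))
       (map_pmf (\<lambda>f. (restr (edges_in B1) f, restr (edges_in B2) f)) (Pi_pmf (edges_in A) False (epr J))))"
    by (subst map_pair[symmetric]) simp
  also have "\<dots> = pair_pmf (config_pmf q J B1) (config_pmf q J B2)"
    unfolding V E config_pmf_alt by (rule pair_rearr_pmf)
  finally show ?thesis .
qed

lemma config_split_edges:
  assumes "finite A" "W1 \<subseteq> edges_in A" "W2 \<subseteq> edges_in A" "W1 \<inter> W2 = {}"
  shows "map_pmf (\<lambda>(\<sigma>,\<omega>). ((\<sigma>, restr W1 \<omega>), restr W2 \<omega>)) (config_pmf q J A)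
     = pair_pmf (pair_pmf (vpmf q A) (Pi_pmf W1 False (epr J))) (Pi_pmf W2 False (epr J))"
proof -
  have E: "map_pmf (\<lambda>f. (restr W1 f, restr W2 f)) (Pi_pmf (edges_in A) False (epr J))
     = pair_pmf (Pi_pmf W1 False (epr J)) (Pi_pmf W2 False (epr J))"
    unfolding restr_def
    by (rule Pi_pmf_split2[OF finite_edges_in[OF assms(1)] assms(2,3,4)])
  have "map_pmf (\<lambda>(\<sigma>,\<omega>). ((\<sigma>, restr W1 \<omega>), restr W2 \<omega>)) (config_pmf q J A)
     = map_pmf (\<lambda>(x, (y, z)). ((x, y), z)) (map_pmf (\<lambda>(\<sigma>,\<omega>). (\<sigma>, (restr W1 \<omega>, restr W2 \<omega>)))
          (pair_pmf (vpmf q A) (Pi_pmf (edges_in A) False (epr J))))"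
    unfolding config_pmf_alt map_pmf_comp by (intro map_pmf_cong refl) auto
  also have "\<dots> = map_pmf (\<lambda>(x, (y, z)). ((x, y), z)) (pair_pmf (map_pmf (\<lambda>x. x) (vpmf q A))
      (map_pmf (\<lambda>f. (restr W1 f, restr W2 f)) (Pi_pmf (edges_in A) False (epr J))))"
    by (subst map_pair[symmetric]) simp
  also have "\<dots> = pair_pmf (pair_pmf (vpmf q A) (Pi_pmf W1 False (epr J))) (Pi_pmf W2 False (epr J))"
    unfolding E by (simp add: pair_pair_pmf)
  finally show ?thesis .
qed


lemma adj_cong:
  assumes "\<And>x. x \<in> B \<Longrightarrow> \<sigma> x = \<sigma>' x" "\<And>e. e \<in> edges_in B \<Longrightarrow> \<omega> e = \<omega>' e"
  shows "adj B \<sigma> \<omega> = adj B \<sigma>' \<omega>'"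
  using assms unfolding adj_def edges_in_def by blast

lemma kmax_cong:
  assumes "\<And>x. x \<in> B \<Longrightarrow> \<sigma> x = \<sigma>' x" "\<And>e. e \<in> edges_in B \<Longrightarrow> \<omega> e = \<omega>' e"
  shows "kmax_size B \<sigma> \<omega> = kmax_size B \<sigma>' \<omega>'"
proof -
  have "adj B \<sigma> \<omega> = adj B \<sigma>' \<omega>'" by (rule adj_cong[OF assms])
  then have c: "cluster B \<sigma> \<omega> = cluster B \<sigma>' \<omega>'" unfolding cluster_def by simp
  have "{card (cluster B \<sigma> \<omega> x) | x. x \<in> B \<and> \<sigma> x} = {card (cluster B \<sigma>' \<omega>' x) | x. x \<in> B \<and> \<sigma>' x}"
    using assms(1) c by force
  then show ?thesis unfolding kmax_size_def by simp
qed

lemma kmax_restr: "kmax_size B (restr B \<sigma>) (restr (edges_in B) \<omega>) = kmax_size B \<sigma> \<omega>"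
  by (rule kmax_cong) (auto simp: restr_def)

lemma rtrancl_map_rel:
  assumes "\<And>x y. (x,y) \<in> r \<Longrightarrow> (f x, f y) \<in> s" "(a,b) \<in> r\<^sup>*"
  shows "(f a, f b) \<in> s\<^sup>*"
  using assms(2)
proof (induction rule: rtrancl_induct)
  case base then show ?case by simp
next
  case (step y z) then show ?case using assms(1) by (meson rtrancl.rtrancl_into_rtrancl)
qed

lemma adj_iso:
  assumes inv: "\<And>x. h (h x) = x"
  shows "(x,y) \<in> adj (h ` B) (\<sigma> \<circ> h) (\<omega> \<circ> image h) \<longleftrightarrow> (h x, h y) \<in> adj B \<sigma> \<omega>"
proof -
  have m: "x \<in> h ` B \<longleftrightarrow> h x \<in> B" for x by (metis inv image_iff)
  have n: "x \<noteq> y \<longleftrightarrow> h x \<noteq> h y" by (metis inv)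
  show ?thesis unfolding adj_def using m n by auto
qed

lemma cluster_iso:
  assumes inv: "\<And>x. h (h x) = x"
  shows "cluster (h ` B) (\<sigma> \<circ> h) (\<omega> \<circ> image h) (h x) = h ` cluster B \<sigma> \<omega> x"
proof -
  let ?a = "adj (h ` B) (\<sigma> \<circ> h) (\<omega> \<circ> image h)" and ?b = "adj B \<sigma> \<omega>"
  have 1: "(u,v) \<in> ?a \<Longrightarrow> (h u, h v) \<in> ?b" for u v using adj_iso[OF inv] by blast
  have 2: "(u,v) \<in> ?b \<Longrightarrow> (h u, h v) \<in> ?a" for u v using adj_iso[OF inv, of "h u" "h v"] inv by simp
  have "z \<in> cluster (h ` B) (\<sigma> \<circ> h) (\<omega> \<circ> image h) (h x) \<longleftrightarrow> z \<in> h ` cluster B \<sigma> \<omega> x" for z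
  proof
    assume "z \<in> cluster (h ` B) (\<sigma> \<circ> h) (\<omega> \<circ> image h) (h x)"
    then have "(h x, z) \<in> ?a\<^sup>*" unfolding cluster_def by simp
    then have "(h (h x), h z) \<in> ?b\<^sup>*" using rtrancl_map_rel[where f=h, OF 1] by blast
    then have "h z \<in> cluster B \<sigma> \<omega> x" unfolding cluster_def using inv by simp
    then show "z \<in> h ` cluster B \<sigma> \<omega> x" using inv by (metis image_eqI)
  next
    assume "z \<in> h ` cluster B \<sigma> \<omega> x"
    then obtain w where w: "z = h w" "(x, w) \<in> ?b\<^sup>*" unfolding cluster_def by auto
    then have "(h x, h w) \<in> ?a\<^sup>*" using rtrancl_map_rel[where f=h, OF 2] by blast
    then show "z \<in> cluster (h ` B) (\<sigma> \<circ> h) (\<omega> \<circ> image h) (h x)" unfolding cluster_def w by simp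
  qed
  then show ?thesis by blast
qed

lemma kmax_iso:
  assumes inv: "\<And>x. h (h x) = x"
  shows "kmax_size (h ` B) (\<sigma> \<circ> h) (\<omega> \<circ> image h) = kmax_size B \<sigma> \<omega>"
proof -
  have injh: "inj h" by (metis inv injI)
  have "{card (cluster (h ` B) (\<sigma> \<circ> h) (\<omega> \<circ> image h) y) | y. y \<in> h ` B \<and> (\<sigma> \<circ> h) y}
      = {card (cluster B \<sigma> \<omega> x) | x. x \<in> B \<and> \<sigma> x}"
  proof (intro equalityI subsetI)
    fix n assume "n \<in> {card (cluster (h ` B) (\<sigma> \<circ> h) (\<omega> \<circ> image h) y) | y. y \<in> h ` B \<and> (\<sigma> \<circ> h) y}"
    then obtain x where x: "x \<in> B" "\<sigma> (h (h x))" "n = card (cluster (h ` B) (\<sigma> \<circ> h) (\<omega> \<circ> image h) (h x))"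
      by auto
    then have "n = card (cluster B \<sigma> \<omega> x)"
      using cluster_iso[OF inv] card_image[OF inj_on_subset[OF injh]] by simp
    then show "n \<in> {card (cluster B \<sigma> \<omega> x) | x. x \<in> B \<and> \<sigma> x}" using x inv by auto
  next
    fix n assume "n \<in> {card (cluster B \<sigma> \<omega> x) | x. x \<in> B \<and> \<sigma> x}"
    then obtain x where x: "x \<in> B" "\<sigma> x" "n = card (cluster B \<sigma> \<omega> x)" by auto
    then have "n = card (cluster (h ` B) (\<sigma> \<circ> h) (\<omega> \<circ> image h) (h x))"
      using cluster_iso[OF inv] card_image[OF inj_on_subset[OF injh]] by simp
    then show "n \<in> {card (cluster (h ` B) (\<sigma> \<circ> h) (\<omega> \<circ> image h) y) | y. y \<in> h ` B \<and> (\<sigma> \<circ> h) y}"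
      using x inv by (auto intro!: exI[of _ "h x"])
  qed
  then show ?thesis unfolding kmax_size_def by simp
qed

lemma edge_level_iso:
  assumes ci: "\<And>x y i. h x i = h y i \<longleftrightarrow> x i = y i"
  shows "edge_level (h ` e) = edge_level e"
proof -
  have "{i. \<exists>x\<in>h ` e. \<exists>y\<in>h ` e. x i \<noteq> y i} = {i. \<exists>x\<in>e. \<exists>y\<in>e. x i \<noteq> y i}"
    using ci by blast
  then show ?thesis unfolding edge_level_def by simp
qed

lemma edges_in_iso:
  assumes inv: "\<And>x. h (h x) = x"
  shows "edges_in (h ` B) = image h ` edges_in B"
proof (intro equalityI subsetI)
  fix e assume "e \<in> edges_in (h ` B)"
  then obtain x y where xy: "x \<in> B" "y \<in> B" "h x \<noteq> h y" "e = {h x, h y}" unfolding edges_in_def by auto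
  then have "x \<noteq> y" by auto
  then have "{x,y} \<in> edges_in B" using xy unfolding edges_in_def by auto
  moreover have "e = h ` {x,y}" using xy by simp
  ultimately show "e \<in> image h ` edges_in B" by blast
next
  fix e assume "e \<in> image h ` edges_in B"
  then obtain x y where "x \<in> B" "y \<in> B" "x \<noteq> y" "e = h ` {x, y}" unfolding edges_in_def by auto
  moreover have "h x \<noteq> h y" using \<open>x \<noteq> y\<close> by (metis inv)
  ultimately show "e \<in> edges_in (h ` B)" unfolding edges_in_def by auto
qed

lemma config_pmf_iso:
  assumes fin: "finite B" and inv: "\<And>x. h (h x) = x" and ci: "\<And>x y i. h x i = h y i \<longleftrightarrow> x i = y i"
  shows "config_pmf q J (h ` B) = map_pmf (\<lambda>(\<sigma>,\<omega>). (\<sigma> \<circ> h, \<omega> \<circ> image h)) (config_pmf q J B)"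
proof -
  have V: "vpmf q (h ` B) = map_pmf (\<lambda>g. g \<circ> h) (vpmf q B)"
    unfolding vpmf_def by (rule Pi_pmf_reindex_inv[OF fin inv]) simp
  have inv2: "image h (image h e) = e" for e using inv by (simp add: image_image)
  have E: "Pi_pmf (image h ` edges_in B) False (epr J) = map_pmf (\<lambda>g. g \<circ> image h) (Pi_pmf (edges_in B) False (epr J))"
  proof (rule Pi_pmf_reindex_inv[OF finite_edges_in[OF fin] inv2])
    fix e
    have "edge_level (h ` e) = edge_level e" by (rule edge_level_iso) (rule ci)
    then show "epr J (image h e) = epr J e" by (simp add: epr_def)
  qed
  show ?thesis unfolding config_pmf_alt edges_in_iso[OF inv] V E map_pair[symmetric] by simp
qed


lemma card_box:
  assumes "finite S"
  shows "card {x::nat\<Rightarrow>nat. (\<forall>i\<in>S. x i < L) \<and> (\<forall>i. i \<notin> S \<longrightarrow> x i = v i)} = L ^ card S"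
    and "finite {x::nat\<Rightarrow>nat. (\<forall>i\<in>S. x i < L) \<and> (\<forall>i. i \<notin> S \<longrightarrow> x i = v i)}"
proof -
  let ?T = "{x::nat\<Rightarrow>nat. (\<forall>i\<in>S. x i < L) \<and> (\<forall>i. i \<notin> S \<longrightarrow> x i = v i)}"
  have bij: "bij_betw (\<lambda>x. restrict x S) ?T (PiE S (\<lambda>_. {..<L}))"
  proof (rule bij_betwI[where g = "\<lambda>f i. if i \<in> S then f i else v i"])
    show "(\<lambda>x. restrict x S) \<in> ?T \<rightarrow> PiE S (\<lambda>_. {..<L})" by auto
    show "(\<lambda>f i. if i \<in> S then f i else v i) \<in> PiE S (\<lambda>_. {..<L}) \<rightarrow> ?T" by auto
    show "(\<lambda>i. if i \<in> S then restrict x S i else v i) = x" if "x \<in> ?T" for x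
      using that by (auto simp: fun_eq_iff)
    show "restrict (\<lambda>i. if i \<in> S then y i else v i) S = y" if "y \<in> PiE S (\<lambda>_. {..<L})" for y
      using that by (auto simp: fun_eq_iff PiE_def extensional_def)
  qed
  have "card ?T = card (PiE S (\<lambda>_. {..<L}))" by (rule bij_betw_same_card[OF bij])
  also have "\<dots> = L ^ card S" using assms by (simp add: card_PiE)
  finally show "card ?T = L ^ card S" .
  show "finite ?T" using bij_betw_finite[OF bij] assms by (simp add: finite_PiE)
qed

lemma block_eq:
  assumes "v \<in> hier L"
  shows "block L k v = {x. (\<forall>i\<in>{1..k}. x i < L) \<and> (\<forall>i. i \<notin> {1..k} \<longrightarrow> x i = v i)}"
proof (intro equalityI subsetI)
  have v: "v 0 = 0" "\<And>i. v i < L" "finite {i. v i \<noteq> 0}" using assms unfolding hier_def by auto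
  fix x assume x: "x \<in> block L k v"
  have xx: "x 0 = 0" "\<And>i. x i < L" "\<And>i. k < i \<Longrightarrow> x i = v i" using x unfolding block_def hier_def by auto
  have "x i = v i" if "i \<notin> {1..k}" for i
  proof (cases "i = 0")
    case True then show ?thesis using xx(1) v(1) by simp
  next
    case False then have "k < i" using that by auto
    then show ?thesis by (rule xx(3))
  qed
  then show "x \<in> {x. (\<forall>i\<in>{1..k}. x i < L) \<and> (\<forall>i. i \<notin> {1..k} \<longrightarrow> x i = v i)}"
    using xx(2) by blast
next
  have v: "v 0 = 0" "\<And>i. v i < L" "finite {i. v i \<noteq> 0}" using assms unfolding hier_def by auto
  fix x assume x: "x \<in> {x. (\<forall>i\<in>{1..k}. x i < L) \<and> (\<forall>i. i \<notin> {1..k} \<longrightarrow> x i = v i)}"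
  then have x1: "\<And>i. i \<in> {1..k} \<Longrightarrow> x i < L" and x2: "\<And>i. i \<notin> {1..k} \<Longrightarrow> x i = v i" by simp_all
  have lt: "x i < L" for i
  proof (cases "i \<in> {1..k}")
    case True then show ?thesis using x1 by blast
  next
    case False then show ?thesis using x2[of i] v(2)[of i] by simp
  qed
  have s: "{i. x i \<noteq> 0} \<subseteq> {1..k} \<union> {i. v i \<noteq> 0}"
  proof
    fix i assume "i \<in> {i. x i \<noteq> 0}"
    then show "i \<in> {1..k} \<union> {i. v i \<noteq> 0}" using x2[of i] by (cases "i \<in> {1..k}") auto
  qed
  have fin: "finite {i. x i \<noteq> 0}" by (rule finite_subset[OF s]) (rule finite_UnI[OF finite_atLeastAtMost v(3)])
  have x0: "x 0 = 0" using x2[of 0] v(1) by simp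
  have gt: "\<forall>i>k. x i = v i" using x2 by simp
  show "x \<in> block L k v" unfolding block_def hier_def using lt fin x0 gt by blast
qed

lemma card_block: "v \<in> hier L \<Longrightarrow> card (block L k v) = L ^ k"
  using card_box(1)[of "{1..k}" L v] by (simp add: block_eq)

lemma finite_block: "v \<in> hier L \<Longrightarrow> finite (block L k v)"
  using card_box(2)[of "{1..k}" L v] by (simp add: block_eq)

lemma block_self: "v \<in> hier L \<Longrightarrow> v \<in> block L k v"
  unfolding block_def by simp

lemma block_sub: "u \<in> block L k' v \<Longrightarrow> k \<le> k' \<Longrightarrow> block L k u \<subseteq> block L k' v"
  unfolding block_def by auto

lemma block_same: "u \<in> block L k v \<Longrightarrow> block L k u = block L k v"
  unfolding block_def by auto

lemma block_hier: "block L k v \<subseteq> hier L"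
  unfolding block_def by auto

definition sw :: "nat \<Rightarrow> (nat \<Rightarrow> nat) \<Rightarrow> (nat \<Rightarrow> nat) \<Rightarrow> (nat \<Rightarrow> nat)" where
  "sw R u x = (\<lambda>i. if R < i then (if x i = 0 then u i else if x i = u i then 0 else x i) else x i)"

lemma sw_inv: "sw R u (sw R u x) = x"
  unfolding sw_def by (auto simp: fun_eq_iff)

lemma sw_ci: "sw R u x i = sw R u y i \<longleftrightarrow> x i = y i"
  unfolding sw_def by auto

lemma sw_block:
  assumes u: "u \<in> hier L"
  shows "sw R u ` block L R (\<lambda>_. 0) = block L R u"
proof -
  have uL: "u i < L" "u 0 = 0" "finite {i. u i \<noteq> 0}" for i using u unfolding hier_def by auto
  have 1: "sw R u x \<in> block L R u" if x: "x \<in> block L R (\<lambda>_. 0)" for x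
  proof -
    have xL: "x i < L" "x 0 = 0" "finite {i. x i \<noteq> 0}" "\<And>i. R < i \<Longrightarrow> x i = 0" for i
      using x unfolding block_def hier_def by auto
    have s: "{i. sw R u x i \<noteq> 0} \<subseteq> {i. x i \<noteq> 0} \<union> {i. u i \<noteq> 0}" unfolding sw_def by auto
    have "finite {i. sw R u x i \<noteq> 0}" by (rule finite_subset[OF s]) (rule finite_UnI[OF xL(3) uL(3)])
    moreover have "sw R u x i < L" for i using xL(1)[of i] uL(1)[of i] unfolding sw_def by auto
    moreover have "sw R u x 0 = 0" using xL(2) unfolding sw_def by simp
    moreover have "\<forall>i>R. sw R u x i = u i" using xL(4) unfolding sw_def by simp
    ultimately show ?thesis unfolding block_def hier_def by simp
  qed
  have 2: "sw R u y \<in> block L R (\<lambda>_. 0)" if y: "y \<in> block L R u" for y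
  proof -
    have yL: "y i < L" "y 0 = 0" "finite {i. y i \<noteq> 0}" "\<And>i. R < i \<Longrightarrow> y i = u i" for i
      using y unfolding block_def hier_def by auto
    have s: "{i. sw R u y i \<noteq> 0} \<subseteq> {i. y i \<noteq> 0} \<union> {i. u i \<noteq> 0}" unfolding sw_def by auto
    have "finite {i. sw R u y i \<noteq> 0}" by (rule finite_subset[OF s]) (rule finite_UnI[OF yL(3) uL(3)])
    moreover have "sw R u y i < L" for i using yL(1)[of i] uL(1)[of i] unfolding sw_def by auto
    moreover have "sw R u y 0 = 0" using yL(2) unfolding sw_def by simp
    moreover have "\<forall>i>R. sw R u y i = 0" using yL(4) unfolding sw_def by simp
    ultimately show ?thesis unfolding block_def hier_def by simp
  qed
  show ?thesis
  proof (intro equalityI subsetI)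
    fix y assume "y \<in> sw R u ` block L R (\<lambda>_. 0)" then show "y \<in> block L R u" using 1 by auto
  next
    fix y assume "y \<in> block L R u"
    then have "sw R u y \<in> block L R (\<lambda>_. 0)" "y = sw R u (sw R u y)" using 2 sw_inv by metis+
    then show "y \<in> sw R u ` block L R (\<lambda>_. 0)" by blast
  qed
qed


lemma zero_hier: "0 < L \<Longrightarrow> (\<lambda>_. 0) \<in> hier L"
  unfolding hier_def by simp

lemma cluster_self: "x \<in> cluster B \<sigma> \<omega> x"
  unfolding cluster_def by simp

lemma adj_sym: "(x,y) \<in> adj B \<sigma> \<omega> \<Longrightarrow> (y,x) \<in> adj B \<sigma> \<omega>"
  unfolding adj_def by (auto simp: insert_commute)

lemma adj_mono: "B \<subseteq> A \<Longrightarrow> adj B \<sigma> \<omega> \<subseteq> adj A \<sigma> \<omega>"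
  unfolding adj_def by auto

lemma rtrancl_sym:
  assumes "\<And>x y. (x,y) \<in> r \<Longrightarrow> (y,x) \<in> r" "(a,b) \<in> r\<^sup>*"
  shows "(b,a) \<in> r\<^sup>*"
  using assms(2)
proof (induction rule: rtrancl_induct)
  case base then show ?case by simp
next
  case (step y z)
  then show ?case using assms(1) by (meson converse_rtrancl_into_rtrancl)
qed

lemma cluster_sub:
  assumes "x \<in> B" shows "cluster B \<sigma> \<omega> x \<subseteq> B"
proof
  fix y assume "y \<in> cluster B \<sigma> \<omega> x"
  then have "(x,y) \<in> (adj B \<sigma> \<omega>)\<^sup>*" unfolding cluster_def by simp
  then show "y \<in> B"
  proof (induction rule: rtrancl_induct)
    case base then show ?case using assms by simp
  next
    case (step y z) then show ?case unfolding adj_def by auto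
  qed
qed

lemma cluster_open:
  assumes "\<sigma> x" "y \<in> cluster B \<sigma> \<omega> x" shows "\<sigma> y"
proof -
  have "(x,y) \<in> (adj B \<sigma> \<omega>)\<^sup>*" using assms(2) unfolding cluster_def by simp
  then show ?thesis
  proof (induction rule: rtrancl_induct)
    case base then show ?case using assms(1) by simp
  next
    case (step y z) then show ?case unfolding adj_def by auto
  qed
qed

lemma cluster_conn:
  assumes "B \<subseteq> A" "y \<in> cluster B \<sigma> \<omega> x" "z \<in> cluster B \<sigma> \<omega> x"
  shows "(y,z) \<in> (adj A \<sigma> \<omega>)\<^sup>*"
proof -
  have "(x,y) \<in> (adj B \<sigma> \<omega>)\<^sup>*" "(x,z) \<in> (adj B \<sigma> \<omega>)\<^sup>*" using assms unfolding cluster_def by auto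
  then have 1: "(x,y) \<in> (adj A \<sigma> \<omega>)\<^sup>*" "(x,z) \<in> (adj A \<sigma> \<omega>)\<^sup>*"
    using rtrancl_mono[OF adj_mono[OF assms(1)]] by blast+
  have "(y,x) \<in> (adj A \<sigma> \<omega>)\<^sup>*" by (rule rtrancl_sym[OF adj_sym 1(1)])
  then show ?thesis using 1(2) by (rule rtrancl_trans)
qed

lemma kmax_fin: "finite B \<Longrightarrow> finite {card (cluster B \<sigma> \<omega> x) | x. x \<in> B \<and> \<sigma> x}"
  by simp

lemma kmax_ge:
  assumes "finite B" "x \<in> B" "\<sigma> x"
  shows "card (cluster B \<sigma> \<omega> x) \<le> kmax_size B \<sigma> \<omega>"
  unfolding kmax_size_def using assms by (intro Max_ge) auto

lemma kmax_attained:
  assumes "finite B" "0 < kmax_size B \<sigma> \<omega>"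
  shows "\<exists>x\<in>B. \<sigma> x \<and> card (cluster B \<sigma> \<omega> x) = kmax_size B \<sigma> \<omega>"
proof -
  let ?S = "{card (cluster B \<sigma> \<omega> x) | x. x \<in> B \<and> \<sigma> x}"
  have fin: "finite ?S" using assms(1) by simp
  have "kmax_size B \<sigma> \<omega> \<in> insert 0 ?S" unfolding kmax_size_def using fin by (intro Max_in) auto
  then have "kmax_size B \<sigma> \<omega> \<in> ?S" using assms(2) by auto
  then show ?thesis by auto
qed


locale perc =
  fixes L R r :: nat and t :: real
  assumes L2: "2 \<le> L" and t09: "0.9 \<le> t" and t1: "t \<le> 1"
begin

definition AA where "AA = block L (R + r) (\<lambda>_. 0)"
definition cn where "cn k = {v \<in> AA. \<forall>i\<le>k. v i = 0}"
definition zk :: "nat \<Rightarrow> (nat \<Rightarrow> nat) \<Rightarrow> (nat \<Rightarrow> nat)" where "zk k x = (\<lambda>i. if i \<le> k then 0 else x i)"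
definition blk where "blk u = block L R u"
definition good where
  "good u \<sigma> \<omega> \<longleftrightarrow> t * real (card (blk u)) \<le> real (kmax_size (blk u) \<sigma> \<omega>)"
definition root where
  "root u \<sigma> \<omega> = (SOME x. x \<in> blk u \<and> \<sigma> x \<and> t * real (card (blk u)) \<le> real (card (cluster (blk u) \<sigma> \<omega> x)))"
definition Ku where "Ku u \<sigma> \<omega> = cluster (blk u) \<sigma> \<omega> (root u \<sigma> \<omega>)"
definition core where "core D \<sigma> \<omega> = \<Union> {Ku u \<sigma> \<omega> | u. u \<in> cn R \<and> u \<in> D \<and> good u \<sigma> \<omega>}"

lemma L0: "0 < L" using L2 by simp

lemma AA_hier: "AA \<subseteq> hier L" unfolding AA_def by (rule block_hier)
lemma fin_AA: "finite AA" unfolding AA_def by (rule finite_block[OF zero_hier[OF L0]])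
lemma card_AA: "card AA = L ^ (R + r)" unfolding AA_def by (rule card_block[OF zero_hier[OF L0]])

lemma cn_sub: "cn k \<subseteq> AA" unfolding cn_def by auto

lemma cn_eq:
  assumes "k \<le> R + r"
  shows "cn k = {x. (\<forall>i\<in>{k+1..R+r}. x i < L) \<and> (\<forall>i. i \<notin> {k+1..R+r} \<longrightarrow> x i = 0)}"
proof (intro equalityI subsetI)
  fix x assume "x \<in> cn k"
  then have x: "x \<in> AA" "\<And>i. i \<le> k \<Longrightarrow> x i = 0" unfolding cn_def by auto
  have b: "\<And>i. i \<in> {1..R+r} \<Longrightarrow> x i < L" "\<And>i. i \<notin> {1..R+r} \<Longrightarrow> x i = 0"
    using x(1) unfolding AA_def block_eq[OF zero_hier[OF L0]] by auto
  have "x i = 0" if "i \<notin> {k+1..R+r}" for i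
  proof (cases "i \<le> k")
    case True then show ?thesis by (rule x(2))
  next
    case False then have "i \<notin> {1..R+r}" using that by auto
    then show ?thesis by (rule b(2))
  qed
  moreover have "x i < L" if "i \<in> {k+1..R+r}" for i using that b(1)[of i] by auto
  ultimately show "x \<in> {x. (\<forall>i\<in>{k+1..R+r}. x i < L) \<and> (\<forall>i. i \<notin> {k+1..R+r} \<longrightarrow> x i = 0)}" by blast
next
  fix x assume "x \<in> {x. (\<forall>i\<in>{k+1..R+r}. x i < L) \<and> (\<forall>i. i \<notin> {k+1..R+r} \<longrightarrow> x i = 0)}"
  then have x1: "\<And>i. i \<in> {k+1..R+r} \<Longrightarrow> x i < L" and x2: "\<And>i. i \<notin> {k+1..R+r} \<Longrightarrow> x i = 0" by simp_all
  have a1: "x i < L" if "i \<in> {1..R+r}" for i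
  proof (cases "i \<in> {k+1..R+r}")
    case True then show ?thesis by (rule x1)
  next
    case False then show ?thesis using x2[of i] L0 by simp
  qed
  have a2: "x i = 0" if "i \<notin> {1..R+r}" for i using that x2[of i] by simp
  have "x \<in> AA" unfolding AA_def block_eq[OF zero_hier[OF L0]] using a1 a2 by simp
  moreover have "\<forall>i\<le>k. x i = 0" using x2 by simp
  ultimately show "x \<in> cn k" unfolding cn_def by simp
qed

lemma card_cn: "k \<le> R + r \<Longrightarrow> card (cn k) = L ^ (R + r - k)"
  using card_box(1)[of "{k+1..R+r}" L "\<lambda>_. 0"] by (simp add: cn_eq)

lemma fin_cn: "finite (cn k)" using finite_subset[OF cn_sub fin_AA] .

lemma cnR_block_eq:
  assumes "R \<le> k" "k \<le> R + r" "v \<in> cn k"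
  shows "cn R \<inter> block L k v = {x. (\<forall>i\<in>{R+1..k}. x i < L) \<and> (\<forall>i. i \<notin> {R+1..k} \<longrightarrow> x i = v i)}"
proof -
  have v: "v \<in> AA" "\<And>i. i \<le> k \<Longrightarrow> v i = 0" using assms(3) unfolding cn_def by auto
  have vh: "v \<in> hier L" using v(1) AA_hier by auto
  have v2: "\<And>i. i \<notin> {k+1..R+r} \<Longrightarrow> v i = 0" using assms(3) cn_eq[OF assms(2)] by auto
  show ?thesis
  proof (intro equalityI subsetI)
    fix x assume "x \<in> cn R \<inter> block L k v"
    then have x: "x \<in> cn R" "x \<in> block L k v" by auto
    have x1: "\<And>i. i \<le> R \<Longrightarrow> x i = 0" using x(1) unfolding cn_def by auto
    have x2: "\<And>i. i \<in> {1..k} \<Longrightarrow> x i < L" "\<And>i. i \<notin> {1..k} \<Longrightarrow> x i = v i"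
      using x(2) unfolding block_eq[OF vh] by auto
    have "x i = v i" if "i \<notin> {R+1..k}" for i
    proof (cases "i \<le> R")
      case True then show ?thesis using x1[of i] v(2)[of i] assms(1) by simp
    next
      case False then have "i \<notin> {1..k}" using that by auto
      then show ?thesis by (rule x2(2))
    qed
    moreover have "x i < L" if "i \<in> {R+1..k}" for i using that x2(1)[of i] by auto
    ultimately show "x \<in> {x. (\<forall>i\<in>{R+1..k}. x i < L) \<and> (\<forall>i. i \<notin> {R+1..k} \<longrightarrow> x i = v i)}" by blast
  next
    fix x assume "x \<in> {x. (\<forall>i\<in>{R+1..k}. x i < L) \<and> (\<forall>i. i \<notin> {R+1..k} \<longrightarrow> x i = v i)}"
    then have x1: "\<And>i. i \<in> {R+1..k} \<Longrightarrow> x i < L" and x2: "\<And>i. i \<notin> {R+1..k} \<Longrightarrow> x i = v i" by simp_all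
    have b1: "x i < L" if "i \<in> {1..k}" for i
    proof (cases "i \<in> {R+1..k}")
      case True then show ?thesis by (rule x1)
    next
      case False then show ?thesis using x2[of i] v(2)[of i] that L0 by simp
    qed
    have b2: "x i = v i" if "i \<notin> {1..k}" for i using that x2[of i] by simp
    have xb: "x \<in> block L k v" unfolding block_eq[OF vh] using b1 b2 by simp
    have c1: "x i < L" if "i \<in> {R+1..R+r}" for i
    proof (cases "i \<in> {R+1..k}")
      case True then show ?thesis by (rule x1)
    next
      case False then have "x i = v i" using x2 by simp
      then show ?thesis using vh unfolding hier_def by simp
    qed
    have c2: "x i = 0" if "i \<notin> {R+1..R+r}" for i
    proof -
      have "i \<notin> {R+1..k}" using that assms by auto
      then have "x i = v i" using x2 by simp
      moreover have "v i = 0" using that v2[of i] v(2)[of i] assms(1) by (cases "i \<le> k") auto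
      ultimately show ?thesis by simp
    qed
    have "x \<in> cn R" unfolding cn_eq[OF le_add1] using c1 c2 by simp
    then show "x \<in> cn R \<inter> block L k v" using xb by simp
  qed
qed

lemma card_cnR_block: "R \<le> k \<Longrightarrow> k \<le> R + r \<Longrightarrow> v \<in> cn k \<Longrightarrow> card (cn R \<inter> block L k v) = L ^ (k - R)"
  using card_box(1)[of "{R+1..k}" L v] by (simp add: cnR_block_eq)

lemma zk_cn:
  assumes "x \<in> AA" "k \<le> R + r"
  shows "zk k x \<in> cn k"
proof -
  have x: "\<And>i. i \<in> {1..R+r} \<Longrightarrow> x i < L" "\<And>i. i \<notin> {1..R+r} \<Longrightarrow> x i = 0"
    using assms(1) unfolding AA_def block_eq[OF zero_hier[OF L0]] by auto
  have "(\<forall>i\<in>{k+1..R+r}. zk k x i < L) \<and> (\<forall>i. i \<notin> {k+1..R+r} \<longrightarrow> zk k x i = 0)"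
    using x unfolding zk_def by auto
  then show ?thesis unfolding cn_eq[OF assms(2)] by simp
qed

lemma in_block_zk: "x \<in> hier L \<Longrightarrow> x \<in> block L k (zk k x)"
  unfolding block_def zk_def by auto

lemma zk_eq: "v \<in> cn k \<Longrightarrow> x \<in> block L k v \<Longrightarrow> zk k x = v"
  unfolding cn_def block_def zk_def by (auto simp: fun_eq_iff)

lemma blk_sub: "u \<in> block L k v \<Longrightarrow> R \<le> k \<Longrightarrow> blk u \<subseteq> block L k v"
  unfolding blk_def by (rule block_sub)

lemma blk_sub_AA: "u \<in> AA \<Longrightarrow> blk u \<subseteq> AA"
  unfolding AA_def by (rule blk_sub) auto

lemma blk_disj:
  assumes "u \<in> cn R" "u' \<in> cn R" "u \<noteq> u'"
  shows "blk u \<inter> blk u' = {}"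
proof (rule ccontr)
  assume "blk u \<inter> blk u' \<noteq> {}"
  then obtain x where "x \<in> block L R u" "x \<in> block L R u'" unfolding blk_def by auto
  then have "zk R x = u" "zk R x = u'" using zk_eq[OF assms(1)] zk_eq[OF assms(2)] by auto
  then show False using assms(3) by simp
qed

lemma fin_blk: "u \<in> AA \<Longrightarrow> finite (blk u)"
  unfolding blk_def using AA_hier finite_block by auto

lemma card_blk: "u \<in> AA \<Longrightarrow> card (blk u) = L ^ R"
  unfolding blk_def using AA_hier card_block by auto

end


context perc begin

lemma tpos: "0 < t" using t09 by simp

lemma good_root:
  assumes u: "u \<in> AA" and g: "good u \<sigma> \<omega>"
  shows "root u \<sigma> \<omega> \<in> blk u \<and> \<sigma> (root u \<sigma> \<omega>) \<and> t * real (card (blk u)) \<le> real (card (Ku u \<sigma> \<omega>))"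
proof -
  have pos: "0 < t * real (card (blk u))" using tpos card_blk[OF u] L0 by simp
  then have "0 < kmax_size (blk u) \<sigma> \<omega>" using g unfolding good_def by linarith
  then obtain x where x: "x \<in> blk u" "\<sigma> x" "card (cluster (blk u) \<sigma> \<omega> x) = kmax_size (blk u) \<sigma> \<omega>"
    using kmax_attained[OF fin_blk[OF u]] by blast
  then have "\<exists>x. x \<in> blk u \<and> \<sigma> x \<and> t * real (card (blk u)) \<le> real (card (cluster (blk u) \<sigma> \<omega> x))"
    using g unfolding good_def by auto
  then show ?thesis unfolding root_def Ku_def by (rule someI_ex)
qed

lemma Ku_props:
  assumes u: "u \<in> AA" and g: "good u \<sigma> \<omega>"
  shows "Ku u \<sigma> \<omega> \<subseteq> blk u" "\<And>y. y \<in> Ku u \<sigma> \<omega> \<Longrightarrow> \<sigma> y" "finite (Ku u \<sigma> \<omega>)"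
    "t * real (L ^ R) \<le> real (card (Ku u \<sigma> \<omega>))" "root u \<sigma> \<omega> \<in> Ku u \<sigma> \<omega>"
proof -
  note r = good_root[OF u g]
  show 1: "Ku u \<sigma> \<omega> \<subseteq> blk u" unfolding Ku_def using r by (intro cluster_sub) simp
  show "\<And>y. y \<in> Ku u \<sigma> \<omega> \<Longrightarrow> \<sigma> y" unfolding Ku_def using r cluster_open by metis
  show "finite (Ku u \<sigma> \<omega>)" using 1 fin_blk[OF u] finite_subset by blast
  show "t * real (L ^ R) \<le> real (card (Ku u \<sigma> \<omega>))" using r card_blk[OF u] by simp
  show "root u \<sigma> \<omega> \<in> Ku u \<sigma> \<omega>" unfolding Ku_def by (rule cluster_self)
qed

lemma Ku_conn:
  assumes u: "u \<in> AA" and "x \<in> Ku u \<sigma> \<omega>" "y \<in> Ku u \<sigma> \<omega>"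
  shows "(x,y) \<in> (adj AA \<sigma> \<omega>)\<^sup>*"
  using assms unfolding Ku_def by (intro cluster_conn[OF blk_sub_AA[OF u]])

lemma core_memE:
  assumes "x \<in> core D \<sigma> \<omega>"
  obtains u where "u \<in> cn R" "u \<in> D" "good u \<sigma> \<omega>" "x \<in> Ku u \<sigma> \<omega>"
  using assms unfolding core_def by blast

lemma core_memI:
  "u \<in> cn R \<Longrightarrow> u \<in> D \<Longrightarrow> good u \<sigma> \<omega> \<Longrightarrow> x \<in> Ku u \<sigma> \<omega> \<Longrightarrow> x \<in> core D \<sigma> \<omega>"
  unfolding core_def by blast

lemma core_sub:
  assumes "R \<le> j" shows "core (block L j v) \<sigma> \<omega> \<subseteq> block L j v"
proof
  fix x assume "x \<in> core (block L j v) \<sigma> \<omega>"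
  then obtain u where u: "u \<in> cn R" "u \<in> block L j v" "good u \<sigma> \<omega>" "x \<in> Ku u \<sigma> \<omega>" by (rule core_memE)
  have "u \<in> AA" using u(1) cn_sub by auto
  then have "x \<in> blk u" using Ku_props(1)[OF _ u(3)] u(4) by auto
  then show "x \<in> block L j v" using blk_sub[OF u(2) assms] by auto
qed

lemma core_open: "x \<in> core D \<sigma> \<omega> \<Longrightarrow> \<sigma> x"
  by (metis Ku_props(2) core_memE cn_sub subsetD)

lemma core_AA: "x \<in> core D \<sigma> \<omega> \<Longrightarrow> x \<in> AA"
  by (metis Ku_props(1) blk_sub_AA core_memE cn_sub subsetD)

lemma core_card_sum:
  shows "real (card (core D \<sigma> \<omega>)) \<ge> real (card {u. u \<in> cn R \<and> u \<in> D \<and> good u \<sigma> \<omega>}) * (t * real (L ^ R))"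
proof -
  define G where "G = {u. u \<in> cn R \<and> u \<in> D \<and> good u \<sigma> \<omega>}"
  have finG: "finite G" unfolding G_def using fin_cn[of R] by (rule finite_subset[rotated]) auto
  have cE: "core D \<sigma> \<omega> = (\<Union>u\<in>G. Ku u \<sigma> \<omega>)" unfolding core_def G_def by blast
  have uA: "u \<in> G \<Longrightarrow> u \<in> AA" for u unfolding G_def using cn_sub by auto
  have "card (\<Union>u\<in>G. Ku u \<sigma> \<omega>) = (\<Sum>u\<in>G. card (Ku u \<sigma> \<omega>))"
  proof (rule card_UN_disjoint[OF finG])
    show "\<forall>u\<in>G. finite (Ku u \<sigma> \<omega>)" using Ku_props(3) uA unfolding G_def by blast
    show "\<forall>u\<in>G. \<forall>u'\<in>G. u \<noteq> u' \<longrightarrow> Ku u \<sigma> \<omega> \<inter> Ku u' \<sigma> \<omega> = {}"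
    proof (intro ballI impI)
      fix u u' assume "u \<in> G" "u' \<in> G" "u \<noteq> u'"
      then have "blk u \<inter> blk u' = {}" "Ku u \<sigma> \<omega> \<subseteq> blk u" "Ku u' \<sigma> \<omega> \<subseteq> blk u'"
        using blk_disj Ku_props(1) uA unfolding G_def by auto
      then show "Ku u \<sigma> \<omega> \<inter> Ku u' \<sigma> \<omega> = {}" by blast
    qed
  qed
  then have "real (card (core D \<sigma> \<omega>)) = (\<Sum>u\<in>G. real (card (Ku u \<sigma> \<omega>)))" unfolding cE by simp
  also have "\<dots> \<ge> (\<Sum>u\<in>G. t * real (L ^ R))"
    using Ku_props(4) uA unfolding G_def by (intro sum_mono) auto
  finally show ?thesis unfolding G_def by simp
qed

definition noE1 where
  "noE1 \<sigma> \<omega> \<longleftrightarrow> (\<forall>u\<in>cn R. \<forall>u'\<in>cn R. \<not> good u \<sigma> \<omega> \<and> \<not> good u' \<sigma> \<omega> \<longrightarrow> u = u')"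

lemma card_good_ge:
  assumes "noE1 \<sigma> \<omega>" "finite S" "S \<subseteq> cn R"
  shows "card S \<le> card {u. u \<in> S \<and> good u \<sigma> \<omega>} + 1"
proof -
  let ?G = "{u. u \<in> S \<and> good u \<sigma> \<omega>}"
  have fin: "finite (S - ?G)" using assms(2) by simp
  have "\<forall>a\<in>S - ?G. \<forall>b\<in>S - ?G. a = b" using assms(1,3) unfolding noE1_def by blast
  then have 1: "card (S - ?G) \<le> Suc 0" using card_le_Suc0_iff_eq[OF fin] by simp
  have sub: "?G \<subseteq> S" by blast
  have finG: "finite ?G" using assms(2) by simp
  have "card (S - ?G) = card S - card ?G" by (rule card_Diff_subset[OF finG sub])
  moreover have "card ?G \<le> card S" by (rule card_mono[OF assms(2) sub])
  ultimately show ?thesis using 1 by simp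
qed

lemma core_card:
  assumes ne: "noE1 \<sigma> \<omega>" and j: "R \<le> j" "j \<le> R + r" and v: "v \<in> cn j"
    and nz: "core (block L j v) \<sigma> \<omega> \<noteq> {}"
  shows "t / 2 * real L ^ j \<le> real (card (core (block L j v) \<sigma> \<omega>))"
proof -
  let ?S = "cn R \<inter> block L j v"
  let ?G = "{u. u \<in> cn R \<and> u \<in> block L j v \<and> good u \<sigma> \<omega>}"
  have G': "?G = {u. u \<in> ?S \<and> good u \<sigma> \<omega>}" by auto
  have cS: "card ?S = L ^ (j - R)" by (rule card_cnR_block[OF j v])
  have finS: "finite ?S" using fin_cn by blast
  have "card ?S \<le> card {u. u \<in> ?S \<and> good u \<sigma> \<omega>} + 1" by (rule card_good_ge[OF ne finS]) simp
  then have c1: "L ^ (j - R) \<le> card ?G + 1" unfolding cS G' .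
  have c2: "1 \<le> card ?G"
  proof -
    obtain x where "x \<in> core (block L j v) \<sigma> \<omega>" using nz by blast
    then obtain u where "u \<in> ?G" by (rule core_memE) auto
    moreover have "finite ?G" using finS by (rule finite_subset[rotated]) auto
    ultimately have "0 < card ?G" using card_gt_0_iff by blast
    then show ?thesis by simp
  qed
  have c3: "real L ^ (j - R) \<le> 2 * real (card ?G)"
  proof (cases "j = R")
    case True then show ?thesis using c2 by simp
  next
    case False
    then have "L ^ 1 \<le> L ^ (j - R)" using L0 j by (intro power_increasing) auto
    then have "2 \<le> L ^ (j - R)" using L2 by simp
    then have "L ^ (j - R) \<le> 2 * card ?G" using c1 by linarith
    then have "real (L ^ (j - R)) \<le> real (2 * card ?G)" by (rule of_nat_mono)
    then show ?thesis by simp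
  qed
  have "t / 2 * real L ^ j = t / 2 * real L ^ (j - R) * real L ^ R"
    using j by (simp add: power_add[symmetric])
  also have "\<dots> \<le> t / 2 * (2 * real (card ?G)) * real L ^ R"
    using c3 tpos by (intro mult_right_mono mult_left_mono) auto
  also have "\<dots> = real (card ?G) * (t * real (L ^ R))" by simp
  also have "\<dots> \<le> real (card (core (block L j v) \<sigma> \<omega>))" by (rule core_card_sum)
  finally show ?thesis .
qed

end


context perc begin

definition Fev where
  "Fev j v c \<sigma> \<omega> \<longleftrightarrow> t / 2 * real L ^ j \<le> real (card (core (block L j v) \<sigma> \<omega>))
     \<and> t / 2 * real L ^ j \<le> real (card (core (block L j (v(Suc j := c))) \<sigma> \<omega>))
     \<and> (\<forall>x\<in>core (block L j v) \<sigma> \<omega>. \<forall>y\<in>core (block L j (v(Suc j := c))) \<sigma> \<omega>. \<not> \<omega> {x, y})"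

definition noF where
  "noF \<sigma> \<omega> \<longleftrightarrow> (\<forall>j v c. R \<le> j \<longrightarrow> j < R + r \<longrightarrow> v \<in> cn j \<longrightarrow> c < L \<longrightarrow> c \<noteq> v (Suc j) \<longrightarrow> \<not> Fev j v c \<sigma> \<omega>)"

lemma upd_cn:
  assumes "v \<in> cn j" "j < R + r" "c < L"
  shows "v(Suc j := c) \<in> cn j"
proof -
  have jj: "j \<le> R + r" using assms(2) by simp
  have v: "\<And>i. i \<in> {j+1..R+r} \<Longrightarrow> v i < L" "\<And>i. i \<notin> {j+1..R+r} \<Longrightarrow> v i = 0"
    using assms(1) unfolding cn_eq[OF jj] by auto
  have "(\<forall>i\<in>{j+1..R+r}. (v(Suc j := c)) i < L) \<and> (\<forall>i. i \<notin> {j+1..R+r} \<longrightarrow> (v(Suc j := c)) i = 0)"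
    using v assms(2,3) by auto
  then show ?thesis unfolding cn_eq[OF jj] by simp
qed

lemma conn:
  assumes ne: "noE1 \<sigma> \<omega>" and nf: "noF \<sigma> \<omega>"
  shows "d \<le> r \<Longrightarrow> v \<in> cn (R + d) \<Longrightarrow> x \<in> core (block L (R + d) v) \<sigma> \<omega> \<Longrightarrow> y \<in> core (block L (R + d) v) \<sigma> \<omega>
     \<Longrightarrow> (x,y) \<in> (adj AA \<sigma> \<omega>)\<^sup>*"
proof (induction d arbitrary: v x y)
  case 0
  from 0(3) obtain u where u: "u \<in> cn R" "u \<in> block L R v" "good u \<sigma> \<omega>" "x \<in> Ku u \<sigma> \<omega>"
    by (auto elim: core_memE)
  from 0(4) obtain u' where u': "u' \<in> cn R" "u' \<in> block L R v" "good u' \<sigma> \<omega>" "y \<in> Ku u' \<sigma> \<omega>"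
    by (auto elim: core_memE)
  have vR: "v \<in> cn R" using 0(2) by simp
  have uh: "u \<in> hier L" "u' \<in> hier L" using u(1) u'(1) cn_sub AA_hier by blast+
  have "u = v" using zk_eq[OF vR u(2)] zk_eq[OF u(1) block_self[OF uh(1)]] by simp
  moreover have "u' = v" using zk_eq[OF vR u'(2)] zk_eq[OF u'(1) block_self[OF uh(2)]] by simp
  ultimately have "x \<in> Ku v \<sigma> \<omega>" "y \<in> Ku v \<sigma> \<omega>" using u(4) u'(4) by auto
  moreover have "v \<in> AA" using vR cn_sub by blast
  ultimately show ?case using Ku_conn by blast
next
  case (Suc d)
  define j where "j = R + d"
  have jr: "j < R + r" "R \<le> j" "j \<le> R + r" using Suc(2) unfolding j_def by auto
  have vS: "v \<in> cn (Suc j)" using Suc(3) unfolding j_def by simp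
  from Suc(4) obtain u where u: "u \<in> cn R" "u \<in> block L (Suc j) v" "good u \<sigma> \<omega>" "x \<in> Ku u \<sigma> \<omega>"
    unfolding j_def by (auto elim: core_memE)
  from Suc(5) obtain u' where u': "u' \<in> cn R" "u' \<in> block L (Suc j) v" "good u' \<sigma> \<omega>" "y \<in> Ku u' \<sigma> \<omega>"
    unfolding j_def by (auto elim: core_memE)
  have uA: "u \<in> AA" "u' \<in> AA" using u(1) u'(1) cn_sub by auto
  define a where "a = zk j u"
  define b where "b = zk j u'"
  have ab: "a \<in> cn j" "b \<in> cn j" unfolding a_def b_def using zk_cn uA jr by auto
  have ua: "u \<in> block L j a" "u' \<in> block L j b" unfolding a_def b_def using in_block_zk uA AA_hier by auto
  have xa: "x \<in> core (block L j a) \<sigma> \<omega>" by (rule core_memI[OF u(1) ua(1) u(3) u(4)])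
  have yb: "y \<in> core (block L j b) \<sigma> \<omega>" by (rule core_memI[OF u'(1) ua(2) u'(3) u'(4)])
  have IH: "\<And>w p q. w \<in> cn j \<Longrightarrow> p \<in> core (block L j w) \<sigma> \<omega> \<Longrightarrow> q \<in> core (block L j w) \<sigma> \<omega>
      \<Longrightarrow> (p,q) \<in> (adj AA \<sigma> \<omega>)\<^sup>*"
    using Suc(1) Suc(2) unfolding j_def by auto
  show ?case
  proof (cases "a = b")
    case True
    then show ?thesis using IH[OF ab(1) xa] yb by simp
  next
    case False
    define c where "c = u' (Suc j)"
    have uv: "u i = v i" "u' i = v i" if "Suc j < i" for i using u(2) u'(2) that unfolding block_def by auto
    have bac: "b = a(Suc j := c)"
      unfolding a_def b_def c_def zk_def using uv by (auto simp: fun_eq_iff)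
    have cL: "c < L" unfolding c_def using uA(2) AA_hier unfolding hier_def by auto
    have cne: "c \<noteq> a (Suc j)" using False bac by auto
    have nzx: "core (block L j a) \<sigma> \<omega> \<noteq> {}" using xa by auto
    have nzy: "core (block L j b) \<sigma> \<omega> \<noteq> {}" using yb by auto
    have c1: "t / 2 * real L ^ j \<le> real (card (core (block L j a) \<sigma> \<omega>))"
      by (rule core_card[OF ne jr(2) jr(3) ab(1) nzx])
    have c2: "t / 2 * real L ^ j \<le> real (card (core (block L j b) \<sigma> \<omega>))"
      by (rule core_card[OF ne jr(2) jr(3) ab(2) nzy])
    have "\<not> Fev j a c \<sigma> \<omega>" using nf jr ab(1) cL cne unfolding noF_def by blast
    then obtain x' y' where x'y': "x' \<in> core (block L j a) \<sigma> \<omega>" "y' \<in> core (block L j b) \<sigma> \<omega>" "\<omega> {x', y'}"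
      using c1 c2 unfolding Fev_def bac[symmetric] by blast
    have x'b: "x' \<in> block L j a" using core_sub[OF jr(2)] x'y'(1) by blast
    have y'b: "y' \<in> block L j b" using core_sub[OF jr(2)] x'y'(2) by blast
    have "x' \<noteq> y'"
    proof
      assume "x' = y'"
      then have "zk j x' = a" "zk j x' = b" using zk_eq[OF ab(1) x'b] zk_eq[OF ab(2) y'b] by auto
      then show False using False by simp
    qed
    then have e: "(x', y') \<in> adj AA \<sigma> \<omega>"
      unfolding adj_def using x'y' core_AA core_open by blast
    have 1: "(x, x') \<in> (adj AA \<sigma> \<omega>)\<^sup>*" by (rule IH[OF ab(1) xa x'y'(1)])
    have 2: "(y', y) \<in> (adj AA \<sigma> \<omega>)\<^sup>*" by (rule IH[OF ab(2) x'y'(2) yb])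
    show ?thesis using 1 e 2 by (meson rtrancl_into_rtrancl rtrancl_trans)
  qed
qed

lemma det_final:
  assumes ne: "noE1 \<sigma> \<omega>" and nf: "noF \<sigma> \<omega>" and N2: "2 \<le> L ^ r"
    and tt: "t' * real (L ^ r) \<le> (real (L ^ r) - 1) * t"
  shows "t' * real (card AA) \<le> real (kmax_size AA \<sigma> \<omega>)"
proof -
  define v0 :: "nat \<Rightarrow> nat" where "v0 = (\<lambda>_. 0)"
  have v0: "v0 \<in> cn (R + r)" unfolding cn_def AA_def v0_def using block_self[OF zero_hier[OF L0]] by simp
  have AAb: "block L (R + r) v0 = AA" unfolding AA_def v0_def by simp
  let ?G = "{u. u \<in> cn R \<and> u \<in> AA \<and> good u \<sigma> \<omega>}"
  have G': "?G = {u. u \<in> cn R \<and> good u \<sigma> \<omega>}" using cn_sub by auto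
  have cR: "card (cn R) = L ^ r" using card_cn[of R] by simp
  have "card (cn R) \<le> card {u. u \<in> cn R \<and> good u \<sigma> \<omega>} + 1" by (rule card_good_ge[OF ne fin_cn]) simp
  then have cG: "L ^ r \<le> card ?G + 1" unfolding cR G' .
  then have "0 < card ?G" using N2 by linarith
  then have "?G \<noteq> {}" by (metis card.empty less_irrefl)
  then obtain u0 where u0: "u0 \<in> ?G" by blast
  have u0A: "u0 \<in> AA" using u0 by simp
  define x0 where "x0 = root u0 \<sigma> \<omega>"
  have x0K: "x0 \<in> Ku u0 \<sigma> \<omega>" unfolding x0_def using Ku_props(5)[OF u0A] u0 by simp
  have x0c: "x0 \<in> core AA \<sigma> \<omega>" using core_memI[of u0 AA \<sigma> \<omega> x0] u0 x0K by simp
  have x0A: "x0 \<in> AA" "\<sigma> x0" using core_AA[OF x0c] core_open[OF x0c] by auto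
  have sub: "core AA \<sigma> \<omega> \<subseteq> cluster AA \<sigma> \<omega> x0"
  proof
    fix y assume y: "y \<in> core AA \<sigma> \<omega>"
    have "(x0, y) \<in> (adj AA \<sigma> \<omega>)\<^sup>*" using conn[OF ne nf, of r v0 x0 y] v0 x0c y AAb by simp
    then show "y \<in> cluster AA \<sigma> \<omega> x0" unfolding cluster_def by simp
  qed
  have finc: "finite (cluster AA \<sigma> \<omega> x0)" using cluster_sub[OF x0A(1)] fin_AA finite_subset by blast
  have "card (core AA \<sigma> \<omega>) \<le> card (cluster AA \<sigma> \<omega> x0)" by (rule card_mono[OF finc sub])
  also have "\<dots> \<le> kmax_size AA \<sigma> \<omega>" by (rule kmax_ge[where \<sigma>=\<sigma>, OF fin_AA x0A])
  finally have k1: "real (card (core AA \<sigma> \<omega>)) \<le> real (kmax_size AA \<sigma> \<omega>)" by simp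
  have k2: "real (card ?G) * (t * real (L ^ R)) \<le> real (card (core AA \<sigma> \<omega>))" by (rule core_card_sum)
  have "real (L ^ r) \<le> real (card ?G + 1)" by (rule of_nat_mono[OF cG])
  then have "real (L ^ r) - 1 \<le> real (card ?G)" by simp
  then have k3: "(real (L ^ r) - 1) * (t * real (L ^ R)) \<le> real (card ?G) * (t * real (L ^ R))"
    using tpos by (intro mult_right_mono) auto
  have "t' * real (card AA) = (t' * real (L ^ r)) * real (L ^ R)" unfolding card_AA by (simp add: power_add)
  also have "\<dots> \<le> ((real (L ^ r) - 1) * t) * real (L ^ R)" using tt by (intro mult_right_mono) auto
  also have "\<dots> = (real (L ^ r) - 1) * (t * real (L ^ R))" by simp
  finally show ?thesis using k1 k2 k3 by linarith
qed

end


context perc begin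

lemma good_restr:
  "good u (restr (blk u) \<sigma>) (restr (edges_in (blk u)) \<omega>) = good u \<sigma> \<omega>"
  unfolding good_def kmax_restr by simp

lemma prob_two_bad:
  assumes u: "u \<in> cn R" "u' \<in> cn R" "u \<noteq> u'"
  shows "measure_pmf.prob (config_pmf q J AA) {(\<sigma>,\<omega>). \<not> good u \<sigma> \<omega> \<and> \<not> good u' \<sigma> \<omega>}
       = measure_pmf.prob (config_pmf q J (blk u)) {(\<sigma>,\<omega>). \<not> good u \<sigma> \<omega>}
       * measure_pmf.prob (config_pmf q J (blk u')) {(\<sigma>,\<omega>). \<not> good u' \<sigma> \<omega>}"
proof -
  have uA: "u \<in> AA" "u' \<in> AA" using u cn_sub by auto
  let ?f = "\<lambda>(\<sigma>,\<omega>). ((restr (blk u) \<sigma>, restr (edges_in (blk u)) \<omega>), (restr (blk u') \<sigma>, restr (edges_in (blk u')) \<omega>))"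
  have m: "map_pmf ?f (config_pmf q J AA) = pair_pmf (config_pmf q J (blk u)) (config_pmf q J (blk u'))"
    by (rule config_split2[OF fin_AA blk_sub_AA[OF uA(1)] blk_sub_AA[OF uA(2)] blk_disj[OF u]])
  have pre: "{(\<sigma>,\<omega>). \<not> good u \<sigma> \<omega> \<and> \<not> good u' \<sigma> \<omega>}
     = ?f -` ({(\<sigma>,\<omega>). \<not> good u \<sigma> \<omega>} \<times> {(\<sigma>,\<omega>). \<not> good u' \<sigma> \<omega>})"
    by (auto simp: good_restr)
  have "measure_pmf.prob (config_pmf q J AA) {(\<sigma>,\<omega>). \<not> good u \<sigma> \<omega> \<and> \<not> good u' \<sigma> \<omega>}
     = measure_pmf.prob (map_pmf ?f (config_pmf q J AA)) ({(\<sigma>,\<omega>). \<not> good u \<sigma> \<omega>} \<times> {(\<sigma>,\<omega>). \<not> good u' \<sigma> \<omega>})"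
    unfolding pre by simp
  also have "\<dots> = measure_pmf.prob (pair_pmf (config_pmf q J (blk u)) (config_pmf q J (blk u')))
      ({(\<sigma>,\<omega>). \<not> good u \<sigma> \<omega>} \<times> {(\<sigma>,\<omega>). \<not> good u' \<sigma> \<omega>})" unfolding m ..
  also have "\<dots> = measure_pmf.prob (config_pmf q J (blk u)) {(\<sigma>,\<omega>). \<not> good u \<sigma> \<omega>}
       * measure_pmf.prob (config_pmf q J (blk u')) {(\<sigma>,\<omega>). \<not> good u' \<sigma> \<omega>}" by (rule prob_pair_times)
  finally show ?thesis .
qed

lemma prob_bad_transl:
  assumes u: "u \<in> AA"
  shows "measure_pmf.prob (config_pmf q J (blk u)) {(\<sigma>,\<omega>). \<not> good u \<sigma> \<omega>}
     = measure_pmf.prob (config_pmf q J (block L R (\<lambda>_. 0)))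
         {(\<sigma>,\<omega>). real (kmax_size (block L R (\<lambda>_. 0)) \<sigma> \<omega>) < t * real (card (block L R (\<lambda>_. 0)))}"
proof -
  let ?B0 = "block L R (\<lambda>_. 0)"
  let ?h = "sw R u"
  have uh: "u \<in> hier L" using u AA_hier by auto
  have bl: "blk u = ?h ` ?B0" unfolding blk_def using sw_block[OF uh] by simp
  have fin0: "finite ?B0" by (rule finite_block[OF zero_hier[OF L0]])
  have c0: "card ?B0 = L ^ R" by (rule card_block[OF zero_hier[OF L0]])
  have cf: "config_pmf q J (?h ` ?B0) = map_pmf (\<lambda>(\<sigma>,\<omega>). (\<sigma> \<circ> ?h, \<omega> \<circ> image ?h)) (config_pmf q J ?B0)"
    by (rule config_pmf_iso[OF fin0 sw_inv sw_ci])
  have pre: "(\<lambda>(\<sigma>,\<omega>). (\<sigma> \<circ> ?h, \<omega> \<circ> image ?h)) -` {(\<sigma>,\<omega>). \<not> good u \<sigma> \<omega>}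
      = {(\<sigma>,\<omega>). real (kmax_size ?B0 \<sigma> \<omega>) < t * real (card ?B0)}"
  proof -
    have "good u (\<sigma> \<circ> ?h) (\<omega> \<circ> image ?h) \<longleftrightarrow> t * real (card ?B0) \<le> real (kmax_size ?B0 \<sigma> \<omega>)" for \<sigma> \<omega>
      unfolding good_def bl kmax_iso[OF sw_inv] using card_blk[OF u] c0 bl by simp
    then show ?thesis by (auto simp: not_le)
  qed
  show ?thesis unfolding bl cf measure_map_pmf pre ..
qed

lemma core_cong:
  assumes j: "R \<le> j" and e: "\<And>e. e \<in> edges_in (block L j v) \<Longrightarrow> \<omega> e = \<omega>' e"
  shows "core (block L j v) \<sigma> \<omega> = core (block L j v) \<sigma> \<omega>'"
proof -
  have eq: "good u \<sigma> \<omega> = good u \<sigma> \<omega>' \<and> Ku u \<sigma> \<omega> = Ku u \<sigma> \<omega>'" if "u \<in> block L j v" for u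
  proof -
    have "edges_in (blk u) \<subseteq> edges_in (block L j v)" by (rule edges_in_mono[OF blk_sub[OF that j]])
    then have "adj (blk u) \<sigma> \<omega> = adj (blk u) \<sigma> \<omega>'" using e by (intro adj_cong) auto
    then have c: "cluster (blk u) \<sigma> \<omega> = cluster (blk u) \<sigma> \<omega>'" unfolding cluster_def by (simp add: fun_eq_iff)
    then have k: "kmax_size (blk u) \<sigma> \<omega> = kmax_size (blk u) \<sigma> \<omega>'" unfolding kmax_size_def by simp
    show ?thesis unfolding good_def Ku_def root_def c k by simp
  qed
  show ?thesis unfolding core_def using eq by (metis (no_types, lifting))
qed

end


type_synonym cfg = "((nat \<Rightarrow> nat) \<Rightarrow> bool) \<times> ((nat \<Rightarrow> nat) set \<Rightarrow> bool)"

context perc begin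

lemma edge_level_cross:
  assumes "x \<in> block L j v" "y \<in> block L j w" "v (Suc j) \<noteq> w (Suc j)" "\<And>i. Suc j < i \<Longrightarrow> v i = w i"
  shows "edge_level {x, y} = Suc j"
proof -
  have xi: "\<And>i. j < i \<Longrightarrow> x i = v i" and yi: "\<And>i. j < i \<Longrightarrow> y i = w i" using assms(1,2) unfolding block_def by auto
  have S: "{i. \<exists>a\<in>{x,y}. \<exists>b\<in>{x,y}. a i \<noteq> b i} = {i. x i \<noteq> y i}" by auto
  have sub: "{i. x i \<noteq> y i} \<subseteq> {..Suc j}"
  proof
    fix i assume "i \<in> {i. x i \<noteq> y i}"
    then have "x i \<noteq> y i" by simp
    moreover have "Suc j < i \<Longrightarrow> x i = y i" using xi yi assms(4) by simp
    ultimately show "i \<in> {..Suc j}" by (cases "Suc j < i") auto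
  qed
  have mem: "Suc j \<in> {i. x i \<noteq> y i}" using xi[of "Suc j"] yi[of "Suc j"] assms(3) by simp
  have fin: "finite {i. x i \<noteq> y i}" using sub finite_subset by blast
  have "Max {i. x i \<noteq> y i} = Suc j"
    by (rule Max_eqI[OF fin]) (use sub mem in auto)
  then show ?thesis unfolding edge_level_def S .
qed

lemma prob_F:
  assumes j: "R \<le> j" "j < R + r" and v: "v \<in> cn j" and c: "c < L" "c \<noteq> v (Suc j)"
    and J0: "\<And>n. 0 \<le> J n"
  shows "measure_pmf.prob (config_pmf q J AA) {(\<sigma>,\<omega>). Fev j v c \<sigma> \<omega>}
         \<le> exp (- (J (Suc j) * (t / 2 * real L ^ j)^2))"
proof -
  define w where "w = v(Suc j := c)"
  have w: "w \<in> cn j" unfolding w_def by (rule upd_cn[OF v j(2) c(1)])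
  define D1 where "D1 = block L j v"
  define D2 where "D2 = block L j w"
  have jj: "j \<le> R + r" using j by simp
  have vA: "v \<in> AA" "w \<in> AA" using v w cn_sub by auto
  have D1A: "D1 \<subseteq> AA" unfolding D1_def AA_def by (rule block_sub[OF vA(1)[unfolded AA_def] jj])
  have D2A: "D2 \<subseteq> AA" unfolding D2_def AA_def by (rule block_sub[OF vA(2)[unfolded AA_def] jj])
  have disj: "D1 \<inter> D2 = {}"
  proof (rule ccontr)
    assume "D1 \<inter> D2 \<noteq> {}"
    then obtain x where "x \<in> D1" "x \<in> D2" by auto
    then have "x (Suc j) = v (Suc j)" "x (Suc j) = w (Suc j)" unfolding D1_def D2_def block_def by auto
    then show False using c(2) unfolding w_def by simp
  qed
  define W1 where "W1 = edges_in D1 \<union> edges_in D2"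
  define W2 where "W2 = {e. \<exists>x\<in>D1. \<exists>y\<in>D2. e = {x, y}}"
  have W1A: "W1 \<subseteq> edges_in AA" unfolding W1_def using edges_in_mono D1A D2A by blast
  have W2A: "W2 \<subseteq> edges_in AA"
  proof
    fix e assume "e \<in> W2"
    then obtain x y where xy: "x \<in> D1" "y \<in> D2" "e = {x,y}" unfolding W2_def by auto
    then have "x \<noteq> y" using disj by auto
    then show "e \<in> edges_in AA" unfolding edges_in_def using xy D1A D2A by blast
  qed
  have W12: "W1 \<inter> W2 = {}"
  proof (rule ccontr)
    assume "W1 \<inter> W2 \<noteq> {}"
    then obtain e x y where xy: "x \<in> D1" "y \<in> D2" "e = {x,y}" "e \<in> W1" unfolding W2_def by auto
    then show False
    proof (cases "e \<in> edges_in D1")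
      case True
      then obtain a b where "a \<in> D1" "b \<in> D1" "e = {a,b}" unfolding edges_in_def by auto
      then have "y \<in> D1" using xy by auto
      then show False using xy disj by auto
    next
      case False
      then have "e \<in> edges_in D2" using xy(4) unfolding W1_def by auto
      then obtain a b where "a \<in> D2" "b \<in> D2" "e = {a,b}" unfolding edges_in_def by auto
      then have "x \<in> D2" using xy by auto
      then show False using xy disj by auto
    qed
  qed
  define \<Phi> :: "cfg \<Rightarrow> cfg \<times> ((nat \<Rightarrow> nat) set \<Rightarrow> bool)" where "\<Phi> = (\<lambda>(\<sigma>,\<omega>). ((\<sigma>, restr W1 \<omega>), restr W2 \<omega>))"
  have mp: "map_pmf \<Phi> (config_pmf q J AA) = pair_pmf (pair_pmf (vpmf q AA) (Pi_pmf W1 False (epr J))) (Pi_pmf W2 False (epr J))"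
    unfolding \<Phi>_def by (rule config_split_edges[OF fin_AA W1A W2A W12])
  define s where "s = t / 2 * real L ^ j"
  have s0: "0 \<le> s" unfolding s_def using tpos by simp
  define C1 :: "cfg \<Rightarrow> (nat \<Rightarrow> nat) set" where "C1 = (\<lambda>a. core D1 (fst a) (snd a))"
  define C2 :: "cfg \<Rightarrow> (nat \<Rightarrow> nat) set" where "C2 = (\<lambda>a. core D2 (fst a) (snd a))"
  define S :: "cfg set" where "S = {a. s \<le> real (card (C1 a)) \<and> s \<le> real (card (C2 a))}"
  define T :: "cfg \<Rightarrow> ((nat \<Rightarrow> nat) set \<Rightarrow> bool) set" where "T = (\<lambda>a. {f. \<forall>x\<in>C1 a. \<forall>y\<in>C2 a. \<not> f {x, y}})"
  have C1s: "C1 a \<subseteq> D1" for a unfolding C1_def D1_def by (rule core_sub[OF j(1)])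
  have C2s: "C2 a \<subseteq> D2" for a unfolding C2_def D2_def by (rule core_sub[OF j(1)])
  have pre: "{(\<sigma>,\<omega>). Fev j v c \<sigma> \<omega>} = \<Phi> -` {(a,b). a \<in> S \<and> b \<in> T a}"
  proof -
    have "Fev j v c \<sigma> \<omega> \<longleftrightarrow> (\<Phi> (\<sigma>,\<omega>)) \<in> {(a,b). a \<in> S \<and> b \<in> T a}" for \<sigma> \<omega>
    proof -
      have e1: "core D1 \<sigma> \<omega> = core D1 \<sigma> (restr W1 \<omega>)" unfolding D1_def
        by (rule core_cong[OF j(1)]) (auto simp: restr_def W1_def D1_def)
      have e2: "core D2 \<sigma> \<omega> = core D2 \<sigma> (restr W1 \<omega>)" unfolding D2_def
        by (rule core_cong[OF j(1)]) (auto simp: restr_def W1_def D2_def)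
      have e3: "restr W2 \<omega> {x, y} = \<omega> {x, y}" if "x \<in> D1" "y \<in> D2" for x y
        using that unfolding restr_def W2_def by auto
      have c1: "C1 ((\<sigma>, restr W1 \<omega>)) = core D1 \<sigma> \<omega>" unfolding C1_def using e1 by simp
      have c2: "C2 ((\<sigma>, restr W1 \<omega>)) = core D2 \<sigma> \<omega>" unfolding C2_def using e2 by simp
      have "(\<forall>x\<in>core D1 \<sigma> \<omega>. \<forall>y\<in>core D2 \<sigma> \<omega>. \<not> \<omega> {x, y}) \<longleftrightarrow>
            (\<forall>x\<in>core D1 \<sigma> \<omega>. \<forall>y\<in>core D2 \<sigma> \<omega>. \<not> restr W2 \<omega> {x, y})"
        using e3 C1s C2s c1 c2 by blast
      then show ?thesis unfolding Fev_def \<Phi>_def S_def T_def s_def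
        using c1 c2 by (simp add: D1_def D2_def w_def)
    qed
    then show ?thesis by auto
  qed
  have bound: "measure_pmf.prob (Pi_pmf W2 False (epr J)) (T a) \<le> exp (- (J (Suc j) * s^2))" if a: "a \<in> S" for a
  proof -
    define E where "E = (\<lambda>(x,y). {x,y}) ` (C1 a \<times> C2 a)"
    have ES: "E \<subseteq> W2"
    proof
      fix e assume "e \<in> E"
      then obtain x y where "x \<in> C1 a" "y \<in> C2 a" "e = {x,y}" unfolding E_def by auto
      then show "e \<in> W2" unfolding W2_def using C1s[of a] C2s[of a] by auto
    qed
    have finW2: "finite W2" using finite_subset[OF W2A finite_edges_in[OF fin_AA]] .
    have TE: "T a = {f. \<forall>e\<in>E. \<not> f e}" unfolding T_def E_def by auto
    have inj: "inj_on (\<lambda>(x,y). {x,y}) (C1 a \<times> C2 a)"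
    proof (rule inj_onI)
      fix p p' assume p: "p \<in> C1 a \<times> C2 a" "p' \<in> C1 a \<times> C2 a" "(\<lambda>(x,y). {x,y}) p = (\<lambda>(x,y). {x,y}) p'"
      obtain x y x' y' where pp: "p = (x,y)" "p' = (x',y')" by (cases p, cases p')
      have "x \<in> C1 a" "y \<in> C2 a" "x' \<in> C1 a" "y' \<in> C2 a" using p(1,2) pp by auto
      then have m: "x \<in> D1" "y \<in> D2" "x' \<in> D1" "y' \<in> D2" using C1s[of a] C2s[of a] by auto
      have "{x,y} = {x',y'}" using p(3) pp by simp
      then have "x = x' \<and> y = y'" using m disj by (auto simp: doubleton_eq_iff)
      then show "p = p'" using pp by simp
    qed
    have finC: "finite (C1 a)" "finite (C2 a)"
      using finite_subset[OF C1s[of a] finite_subset[OF D1A fin_AA]] finite_subset[OF C2s[of a] finite_subset[OF D2A fin_AA]] by auto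
    have cE: "card E = card (C1 a) * card (C2 a)" unfolding E_def
      using card_image[OF inj] card_cartesian_product by simp
    have lev: "edge_level e = Suc j" if "e \<in> E" for e
    proof -
      obtain x y where xy: "x \<in> C1 a" "y \<in> C2 a" "e = {x,y}" using \<open>e \<in> E\<close> unfolding E_def by auto
      then have xy2: "x \<in> block L j v" "y \<in> block L j w" using C1s[of a] C2s[of a] unfolding D1_def D2_def by auto
      have "v (Suc j) \<noteq> w (Suc j)" "\<And>i. Suc j < i \<Longrightarrow> v i = w i" using c(2) unfolding w_def by auto
      then have "edge_level {x, y} = Suc j" by (rule edge_level_cross[OF xy2])
      then show ?thesis using xy(3) by simp
    qed
    have "measure_pmf.prob (Pi_pmf W2 False (epr J)) (T a)
        = measure_pmf.prob (Pi_pmf W2 False (\<lambda>e. bernoulli_pmf (1 - exp (- J (edge_level e))))) {f. \<forall>e\<in>E. \<not> f e}"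
      by (simp only: TE epr_def[abs_def])
    also have "\<dots> = (\<Prod>e\<in>E. (1 - (1 - exp (- J (edge_level e)))))"
      by (rule prob_Pi_all_false[OF finW2 ES]) (use J0 in auto)
    also have "\<dots> = (\<Prod>e\<in>E. exp (- J (Suc j)))" using lev by simp
    also have "\<dots> = exp (- J (Suc j)) ^ card E" by simp
    also have "\<dots> = exp (- (J (Suc j) * real (card E)))"
      by (simp add: exp_of_nat_mult[symmetric] mult.commute)
    also have "\<dots> \<le> exp (- (J (Suc j) * s^2))"
    proof -
      have "s * s \<le> real (card (C1 a)) * real (card (C2 a))"
        using a s0 unfolding S_def by (intro mult_mono) auto
      then have "s^2 \<le> real (card E)" unfolding cE by (simp add: power2_eq_square)
      then have "J (Suc j) * s^2 \<le> J (Suc j) * real (card E)" using J0 by (intro mult_left_mono) auto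
      then show ?thesis by simp
    qed
    finally show ?thesis .
  qed
  have "measure_pmf.prob (config_pmf q J AA) {(\<sigma>,\<omega>). Fev j v c \<sigma> \<omega>}
      = measure_pmf.prob (map_pmf \<Phi> (config_pmf q J AA)) {(a,b). a \<in> S \<and> b \<in> T a}"
    unfolding pre by simp
  also have "\<dots> \<le> exp (- (J (Suc j) * s^2))"
    unfolding mp by (rule prob_pair_le[OF bound]) auto
  finally show ?thesis unfolding s_def .
qed

end


lemma r_scale_prop:
  assumes L: "2 \<le> L" and n: "1 \<le> n"
  shows "n^2 \<le> L ^ r_scale L n \<and> L ^ r_scale L n < L * n^2"
proof -
  define k where "k = (LEAST k. n^2 \<le> L ^ k)"
  have ex: "n^2 \<le> L ^ (n^2)"
  proof -
    have "n^2 < 2 ^ (n^2)" by (rule less_exp)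
    also have "\<dots> \<le> L ^ (n^2)" using L by (intro power_mono) auto
    finally show ?thesis by simp
  qed
  have k1: "n^2 \<le> L ^ k" unfolding k_def by (rule LeastI[of _ "n^2"]) (rule ex)
  have k2: "L ^ k < L * n^2"
  proof (cases k)
    case 0
    have "1 \<le> n^2" using n by simp
    then have a: "L \<le> L * n^2" by simp
    have "L ^ k = 1" using 0 by simp
    then show ?thesis using L a by linarith
  next
    case (Suc k')
    have "\<not> n^2 \<le> L ^ k'" unfolding k_def using Suc k_def not_less_Least by (metis lessI)
    then have "L ^ k' < n^2" by simp
    then have "L * L ^ k' < L * n^2" using L by simp
    then show ?thesis using Suc by simp
  qed
  have uniq: "r' = k" if "n^2 \<le> L ^ r' \<and> L ^ r' < L * n^2" for r'
  proof (rule ccontr)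
    assume "r' \<noteq> k"
    then consider "r' < k" | "k < r'" by linarith
    then show False
    proof cases
      case 1
      then have "L ^ Suc r' \<le> L ^ k" using L by (intro power_increasing) auto
      then have "L * L ^ r' \<le> L ^ k" by simp
      moreover have "L * n^2 \<le> L * L ^ r'" using that by simp
      ultimately show False using k2 by linarith
    next
      case 2
      then have "L ^ Suc k \<le> L ^ r'" using L by (intro power_increasing) auto
      then have "L * L ^ k \<le> L ^ r'" by simp
      moreover have "L * n^2 \<le> L * L ^ k" using k1 by simp
      ultimately show False using that by linarith
    qed
  qed
  have "r_scale L n = k" unfolding r_scale_def
  proof (rule the_equality)
    show "n^2 \<le> L ^ k \<and> L ^ k < L * n^2" using k1 k2 by simp
  next
    fix r' assume "n^2 \<le> L ^ r' \<and> L ^ r' < L * n^2"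
    then show "r' = k" by (rule uniq)
  qed
  then show ?thesis using k1 k2 by simp
qed

lemma r_scale_pos:
  assumes L: "2 \<le> L" and n: "2 \<le> n"
  shows "1 \<le> r_scale L n"
proof (rule ccontr)
  assume "\<not> 1 \<le> r_scale L n"
  then have "r_scale L n = 0" by simp
  moreover have "n^2 \<le> L ^ r_scale L n" using r_scale_prop[OF L, of n] n by linarith
  moreover have "4 \<le> n^2"
  proof -
    have "2 * 2 \<le> n * n" using n by (intro mult_le_mono) auto
    then show ?thesis by (simp add: power2_eq_square)
  qed
  ultimately show False by simp
qed

lemma R_scale_Suc:
  assumes "M \<le> m"
  shows "R_scale L M (m + 1) = R_scale L M m + r_scale L (m + 1)"
  unfolding R_scale_def using assms by simp

lemma R_scale_ge:
  assumes L: "2 \<le> L" and M: "2 \<le> M" and m: "M \<le> m"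
  shows "m \<le> R_scale L M m"
proof -
  have "(\<Sum>i=M..m. (1::nat)) \<le> (\<Sum>i=M..m. r_scale L i)"
    by (rule sum_mono) (use r_scale_pos[OF L] M in auto)
  then have "m + 1 - M \<le> (\<Sum>i=M..m. r_scale L i)" by simp
  then show ?thesis unfolding R_scale_def using m by simp
qed

lemma geom_sum_le:
  assumes "2 \<le> (L::nat)"
  shows "(\<Sum>i<r. L ^ i) \<le> L ^ r"
proof (induction r)
  case 0 then show ?case by simp
next
  case (Suc r)
  have "(\<Sum>i<Suc r. L ^ i) = (\<Sum>i<r. L ^ i) + L ^ r" by simp
  also have "\<dots> \<le> 2 * L ^ r" using Suc by simp
  also have "\<dots> \<le> L * L ^ r" using assms by simp
  finally show ?case by simp
qed

lemma count_sum_le: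
  assumes "2 \<le> (L::nat)"
  shows "(\<Sum>j\<in>{R..<R+r}. L ^ (R + r - j) * L) \<le> L ^ (r + 2)"
proof -
  have "(\<Sum>j\<in>{R..<R+r}. L ^ (R + r - j) * L) = (\<Sum>i\<in>{0..<r}. L ^ (R + r - (i + R)) * L)"
    using sum.shift_bounds_nat_ivl[of "\<lambda>j. L ^ (R + r - j) * L" 0 R r] by (simp add: add.commute)
  also have "\<dots> = (\<Sum>i<r. (\<lambda>i. L ^ Suc i * L) (r - Suc i))"
    by (intro sum.cong) (auto simp: Suc_diff_Suc)
  also have "\<dots> = (\<Sum>i<r. L ^ Suc i * L)" by (rule sum.nat_diff_reindex)
  also have "\<dots> = (\<Sum>i<r. L^2 * L ^ i)"
  proof (intro sum.cong refl)
    fix i show "L ^ Suc i * L = L^2 * L ^ i" by (simp add: power2_eq_square power_Suc mult_ac)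
  qed
  also have "\<dots> = L^2 * (\<Sum>i<r. L ^ i)" by (simp add: sum_distrib_left)
  also have "\<dots> \<le> L^2 * L ^ r" using geom_sum_le[OF assms] by simp
  also have "\<dots> = L ^ (r + 2)" by (simp only: power_add mult.commute)
  finally show ?thesis .
qed

lemma theta_props:
  assumes M: "1 \<le> M" and m: "M \<le> m" and h: "1 - (\<Sum>k. 1 / (real (k + M))^2) \<ge> 0.9"
  shows "0.9 \<le> theta M m" "theta M m \<le> 1" "theta M (m + 1) = theta M m - 1 / (real (m + 1))^2"
proof -
  have summ: "summable (\<lambda>k. 1 / (real (k + M))^2)"
  proof -
    have "summable (\<lambda>n. inverse (real n ^ 2))" by (rule inverse_power_summable) simp
    then have "summable (\<lambda>n. inverse (real (n + M) ^ 2))" by (subst summable_iff_shift) 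
    then show ?thesis by (simp add: divide_inverse)
  qed
  have "(\<Sum>k=M..m. 1 / (real k)^2) = (\<Sum>i=0..m - M. 1 / (real (i + M))^2)"
    using sum.shift_bounds_cl_nat_ivl[of "\<lambda>k. 1 / (real k)^2" 0 M "m - M"] m by simp
  also have "\<dots> \<le> (\<Sum>k. 1 / (real (k + M))^2)"
    by (rule sum_le_suminf[OF summ]) auto
  finally show "0.9 \<le> theta M m" unfolding theta_def using h by simp
  have "0 \<le> (\<Sum>k=M..m. 1 / (real k)^2)" by (intro sum_nonneg) auto
  then show "theta M m \<le> 1" unfolding theta_def by simp
  show "theta M (m + 1) = theta M m - 1 / (real (m + 1))^2" unfolding theta_def using m by simp
qed


lemma exp_bound:
  fixes a t :: real and L m j :: nat and Jv :: real
  assumes L: "2 \<le> L" and a: "0 < a" and t: "0.9 \<le> t" and m: "1 \<le> m" "m \<le> Suc j"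
    and J: "Jv \<ge> a * real L powr (1 - 2 * real (Suc j)) * ln (real (Suc j))"
  shows "exp (- (Jv * (t / 2 * real L ^ j)^2)) \<le> real m powr (- a / (10 * real L))"
proof -
  define x where "x = real L"
  define n where "n = real (Suc j)"
  have x0: "0 < x" unfolding x_def using L by simp
  have n1: "1 \<le> n" unfolding n_def by simp
  have ln0: "0 \<le> ln n" using n1 by simp
  have xp: "x powr (1 - 2 * n) * x ^ (2 * j) = 1 / x"
  proof -
    have "x ^ (2 * j) = x powr (real (2 * j))" by (rule powr_realpow[OF x0, symmetric])
    then have "x powr (1 - 2 * n) * x ^ (2 * j) = x powr (1 - 2 * n + real (2 * j))" using x0 by (simp add: powr_add)
    also have "1 - 2 * n + real (2 * j) = -1" unfolding n_def by simp
    finally show ?thesis using x0 by (simp add: powr_minus divide_inverse)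
  qed
  have sq: "(t / 2 * x ^ j)^2 = t^2 / 4 * x ^ (2 * j)" by (simp add: power_mult_distrib power_mult power2_eq_square)
  have t2: "0.1 \<le> t^2 / 4"
  proof -
    have "0.9 * 0.9 \<le> t * t" by (rule mult_mono) (use t in auto)
    then show ?thesis by (simp add: power2_eq_square)
  qed
  have "a / (10 * x) * ln n \<le> (a * ln n / x) * (t^2 / 4)"
  proof -
    have "a / (10 * x) * ln n = (a * ln n / x) * 0.1" by (simp add: field_simps)
    also have "\<dots> \<le> (a * ln n / x) * (t^2 / 4)" using t2 a ln0 x0 by (intro mult_left_mono) auto
    finally show ?thesis .
  qed
  also have "(a * ln n / x) * (t^2 / 4) = a * (x powr (1 - 2 * n) * x ^ (2 * j)) * ln n * (t^2 / 4)"
    unfolding xp by simp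
  also have "\<dots> = (a * x powr (1 - 2 * n) * ln n) * (t / 2 * x ^ j)^2" unfolding sq by (simp add: mult_ac)
  also have "\<dots> \<le> Jv * (t / 2 * x ^ j)^2"
    using J unfolding x_def n_def by (intro mult_right_mono) auto
  finally have key: "a / (10 * x) * ln n \<le> Jv * (t / 2 * x ^ j)^2" .
  have "exp (- (Jv * (t / 2 * x ^ j)^2)) \<le> exp (- (a / (10 * x)) * ln n)" using key by simp
  also have "\<dots> = n powr (- (a / (10 * x)))" using n1 by (simp add: powr_def)
  also have "\<dots> \<le> real m powr (- (a / (10 * x)))"
    using m a x0 unfolding n_def by (intro powr_mono2') auto
  finally show ?thesis unfolding x_def by simp
qed


theorem lemma2p2:
  fixes L M m :: nat and a q :: real and J :: "nat \<Rightarrow> real"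
  assumes "L \<ge> 2"
    and "a > 200 * real L"
    and "M > L^2"
    and "1 - (\<Sum>k. 1 / (real (k + M))^2) \<ge> 0.9"
    and "real M ^ 2 \<ge> 2 ^ 14"
    and "m \<ge> M"
    and "0 \<le> q" "q \<le> 1"
    and "\<forall>n. J n \<ge> 0"
    and "\<forall>n > R_scale L M m. J n \<ge> a * real L powr (1 - 2 * real n) * ln (real n)"
  shows "prob_bad L M q J (m + 1)
           \<le> real L ^ 2 * real (m + 1) ^ 4 * (prob_bad L M q J m)^2
             + real (m + 1) ^ 2 * real L ^ 3 * real m powr (- a / (10 * real L))"
proof -
  note L2 = assms(1) and hm = assms(6) and hsum = assms(4)
  have J0: "\<And>n. 0 \<le> J n" using assms(9) by simp
  have a0: "0 < a" using assms(2) by simp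
  have "2 * 2 \<le> L * L" using L2 by (intro mult_le_mono) auto
  then have "4 \<le> L^2" by (simp add: power2_eq_square)
  then have M2: "2 \<le> M" using assms(3) by linarith
  have m2: "2 \<le> m" using M2 hm by linarith
  define R where "R = R_scale L M m"
  define r where "r = r_scale L (m + 1)"
  define t where "t = theta M m"
  define t' where "t' = theta M (m + 1)"
  define N where "N = L ^ r"
  have th: "0.9 \<le> t" "t \<le> 1" "t' = t - 1 / (real (m + 1))^2"
    using theta_props[OF _ hm hsum] M2 unfolding t_def t'_def by auto
  interpret P: perc L R r t by unfold_locales (use L2 th in auto)
  have rp: "(m + 1)^2 \<le> N" "N < L * (m + 1)^2" using r_scale_prop[OF L2, of "m + 1"] unfolding N_def r_def by auto
  have RR: "R_scale L M (m + 1) = R + r" unfolding R_def r_def by (rule R_scale_Suc[OF hm])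
  have Rm: "m \<le> R" unfolding R_def by (rule R_scale_ge[OF L2 M2 hm])
  define B0 where "B0 = block L R (\<lambda>_. 0)"
  define p0 where "p0 = measure_pmf.prob (config_pmf q J B0)
         {(\<sigma>,\<omega>). real (kmax_size B0 \<sigma> \<omega>) < t * real (card B0)}"
  have p0_eq: "prob_bad L M q J m = p0" unfolding prob_bad_def p0_def B0_def R_def t_def Let_def by (rule refl)
  define Bad where "Bad = {(\<sigma>,\<omega>). real (kmax_size P.AA \<sigma> \<omega>) < t' * real (card P.AA)}"
  have lhs: "prob_bad L M q J (m + 1) = measure_pmf.prob (config_pmf q J P.AA) Bad"
  proof -
    have e: "block L (R_scale L M (m + 1)) (\<lambda>_. 0) = P.AA" unfolding RR P.AA_def by (rule refl)
    show ?thesis unfolding prob_bad_def Let_def e Bad_def t'_def by simp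
  qed
  define Pp where "Pp = {p. fst p \<in> P.cn R \<and> snd p \<in> P.cn R \<and> fst p \<noteq> snd p}"
  define E1 where "E1 = (\<lambda>p. {(\<sigma>,\<omega>). \<not> P.good (fst p) \<sigma> \<omega> \<and> \<not> P.good (snd p) \<sigma> \<omega>})"
  define II where "II = {i. R \<le> fst i \<and> fst i < R + r \<and> fst (snd i) \<in> P.cn (fst i) \<and> snd (snd i) < L
                            \<and> snd (snd i) \<noteq> fst (snd i) (Suc (fst i))}"
  define Fs where "Fs = (\<lambda>i. {(\<sigma>,\<omega>). P.Fev (fst i) (fst (snd i)) (snd (snd i)) \<sigma> \<omega>})"
  have N2: "2 \<le> L ^ r"
  proof -
    have "m + 1 \<le> (m + 1) * (m + 1)" by (rule le_square)
    then have "m + 1 \<le> (m + 1)^2" by (simp add: power2_eq_square)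
    then show ?thesis using rp(1) m2 unfolding N_def by linarith
  qed
  have tt: "t' * real (L ^ r) \<le> (real (L ^ r) - 1) * t"
  proof -
    have m0: "0 < real (m + 1)^2" by simp
    have "real ((m + 1)^2) \<le> real N" using rp(1) by (rule of_nat_mono)
    then have "1 \<le> real N / real (m + 1)^2" using m0 by simp
    then have "t \<le> real N / real (m + 1)^2" using th(2) by linarith
    then have "t \<le> real N * (1 / real (m + 1)^2)" by simp
    then show ?thesis unfolding th(3) N_def by (simp add: algebra_simps)
  qed
  have incl: "Bad \<subseteq> (\<Union>p\<in>Pp. E1 p) \<union> (\<Union>i\<in>II. Fs i)"
  proof
    fix z assume z: "z \<in> Bad"
    obtain \<sigma> \<omega> where zz: "z = (\<sigma>, \<omega>)" by (cases z)
    show "z \<in> (\<Union>p\<in>Pp. E1 p) \<union> (\<Union>i\<in>II. Fs i)"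
    proof (rule ccontr)
      assume nz: "z \<notin> (\<Union>p\<in>Pp. E1 p) \<union> (\<Union>i\<in>II. Fs i)"
      have ne: "P.noE1 \<sigma> \<omega>" unfolding P.noE1_def
      proof (intro ballI impI)
        fix u u' assume u: "u \<in> P.cn R" "u' \<in> P.cn R" "\<not> P.good u \<sigma> \<omega> \<and> \<not> P.good u' \<sigma> \<omega>"
        show "u = u'"
        proof (rule ccontr)
          assume "u \<noteq> u'"
          then have "(u,u') \<in> Pp" using u unfolding Pp_def by simp
          moreover have "z \<in> E1 (u,u')" using u zz unfolding E1_def by simp
          ultimately show False using nz by blast
        qed
      qed
      have nf: "P.noF \<sigma> \<omega>" unfolding P.noF_def
      proof (intro allI impI)
        fix j v c assume h: "R \<le> j" "j < R + r" "v \<in> P.cn j" "c < L" "c \<noteq> v (Suc j)"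
        show "\<not> P.Fev j v c \<sigma> \<omega>"
        proof
          assume "P.Fev j v c \<sigma> \<omega>"
          then have "z \<in> Fs (j, v, c)" using zz unfolding Fs_def by simp
          moreover have "(j, v, c) \<in> II" using h unfolding II_def by simp
          ultimately show False using nz by blast
        qed
      qed
      have "t' * real (card P.AA) \<le> real (kmax_size P.AA \<sigma> \<omega>)" by (rule P.det_final[OF ne nf N2 tt])
      then show False using z zz unfolding Bad_def by simp
    qed
  qed
  let ?Pr = "measure_pmf.prob (config_pmf q J P.AA)"
  have finPp: "finite Pp"
  proof -
    have "Pp \<subseteq> P.cn R \<times> P.cn R" unfolding Pp_def by auto
    moreover have "finite (P.cn R \<times> P.cn R)" using P.fin_cn by simp
    ultimately show ?thesis by (rule finite_subset)
  qed
  have cPp: "card Pp \<le> N * N"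
  proof -
    have "Pp \<subseteq> P.cn R \<times> P.cn R" unfolding Pp_def by auto
    then have "card Pp \<le> card (P.cn R \<times> P.cn R)" using P.fin_cn by (intro card_mono) auto
    also have "\<dots> = N * N" using P.card_cn[of R] unfolding N_def by (simp add: card_cartesian_product)
    finally show ?thesis .
  qed
  define SS where "SS = (SIGMA j:{R..<R+r}. P.cn j \<times> {..<L})"
  have IIS: "II \<subseteq> SS" unfolding II_def SS_def by auto
  have finSS: "finite SS" unfolding SS_def using P.fin_cn by auto
  have finII: "finite II" using finite_subset[OF IIS finSS] .
  have cII: "card II \<le> L ^ (r + 2)"
  proof -
    have "card II \<le> card SS" by (rule card_mono[OF finSS IIS])
    also have "card SS = (\<Sum>j\<in>{R..<R+r}. card (P.cn j \<times> {..<L}))"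
      unfolding SS_def by (rule card_SigmaI) (use P.fin_cn in auto)
    also have "\<dots> = (\<Sum>j\<in>{R..<R+r}. L ^ (R + r - j) * L)"
      by (intro sum.cong refl) (simp add: card_cartesian_product P.card_cn)
    also have "\<dots> \<le> L ^ (r + 2)" by (rule count_sum_le[OF L2])
    finally show ?thesis .
  qed
  define b where "b = real m powr (- a / (10 * real L))"
  have b0: "0 \<le> b" unfolding b_def by simp
  have pE1: "?Pr (E1 p) = p0 * p0" if "p \<in> Pp" for p
  proof -
    have u: "fst p \<in> P.cn R" "snd p \<in> P.cn R" "fst p \<noteq> snd p" using that unfolding Pp_def by auto
    have uA: "fst p \<in> P.AA" "snd p \<in> P.AA" using u P.cn_sub by auto
    show ?thesis unfolding E1_def P.prob_two_bad[OF u] P.prob_bad_transl[OF uA(1)] P.prob_bad_transl[OF uA(2)]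
      p0_def B0_def ..
  qed
  have pF: "?Pr (Fs i) \<le> b" if "i \<in> II" for i
  proof -
    obtain j v c where i: "i = (j, v, c)" by (cases i) auto
    have h: "R \<le> j" "j < R + r" "v \<in> P.cn j" "c < L" "c \<noteq> v (Suc j)" using that unfolding II_def i by auto
    have "?Pr (Fs i) \<le> exp (- (J (Suc j) * (t / 2 * real L ^ j)^2))"
      unfolding Fs_def i fst_conv snd_conv by (rule P.prob_F[OF h J0])
    also have "\<dots> \<le> b" unfolding b_def
    proof (rule exp_bound[OF L2 a0 th(1)])
      show "1 \<le> m" using m2 by simp
      show "m \<le> Suc j" using Rm h by simp
      show "a * real L powr (1 - 2 * real (Suc j)) * ln (real (Suc j)) \<le> J (Suc j)"
      proof -
        have "Suc j > R_scale L M m" using h(1) unfolding R_def by simp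
        then show ?thesis using assms(10) by blast
      qed
    qed
    finally show ?thesis .
  qed
  have "?Pr Bad \<le> ?Pr ((\<Union>p\<in>Pp. E1 p) \<union> (\<Union>i\<in>II. Fs i))"
    by (rule measure_pmf.finite_measure_mono[OF incl]) simp
  also have "\<dots> \<le> ?Pr (\<Union>p\<in>Pp. E1 p) + ?Pr (\<Union>i\<in>II. Fs i)"
    by (rule measure_Un_le) simp_all
  also have "?Pr (\<Union>p\<in>Pp. E1 p) \<le> (\<Sum>p\<in>Pp. ?Pr (E1 p))"
    by (rule measure_UNION_le[OF finPp]) simp
  also have "\<dots> = (\<Sum>p\<in>Pp. p0 * p0)" using pE1 by (intro sum.cong) auto
  also have "\<dots> = real (card Pp) * p0^2" by (simp add: power2_eq_square)
  also have "?Pr (\<Union>i\<in>II. Fs i) \<le> (\<Sum>i\<in>II. ?Pr (Fs i))"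
    by (rule measure_UNION_le[OF finII]) simp
  also have "\<dots> \<le> (\<Sum>i\<in>II. b)" using pF by (intro sum_mono) auto
  also have "\<dots> = real (card II) * b" by simp
  finally have main: "?Pr Bad \<le> real (card Pp) * p0^2 + real (card II) * b" by auto
  have Nr: "real N \<le> real L * real (m + 1)^2"
  proof -
    have "N \<le> L * (m + 1)^2" using rp(2) by simp
    then have "real N \<le> real (L * (m + 1)^2)" by (rule of_nat_mono)
    then show ?thesis by simp
  qed
  have A1: "real (card Pp) * p0^2 \<le> real L ^ 2 * real (m + 1) ^ 4 * p0^2"
  proof -
    have "real (card Pp) \<le> real (N * N)" using cPp by (rule of_nat_mono)
    also have "\<dots> = real N * real N" by simp
    also have "\<dots> \<le> (real L * real (m + 1)^2) * (real L * real (m + 1)^2)"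
      using Nr by (intro mult_mono) auto
    also have "\<dots> = real L ^ 2 * real (m + 1) ^ 4" by (simp add: power2_eq_square power4_eq_xxxx mult_ac)
    finally show ?thesis by (intro mult_right_mono) auto
  qed
  have A2: "real (card II) * b \<le> real (m + 1) ^ 2 * real L ^ 3 * b"
  proof -
    have "real (card II) \<le> real (L ^ (r + 2))" using cII by (rule of_nat_mono)
    also have "\<dots> = real L ^ 2 * real N"
    proof -
      have "L ^ (r + 2) = L ^ 2 * N" unfolding N_def by (simp only: power_add mult.commute)
      then show ?thesis by (simp only: of_nat_mult of_nat_power)
    qed
    also have "\<dots> \<le> real L ^ 2 * (real L * real (m + 1)^2)" using Nr by (intro mult_left_mono) auto
    also have "\<dots> = real (m + 1) ^ 2 * real L ^ 3" by (simp add: power2_eq_square power3_eq_cube mult_ac)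
    finally show ?thesis using b0 by (intro mult_right_mono) auto
  qed
  show ?thesis unfolding lhs p0_eq using main A1 A2 unfolding b_def by linarith
qed


end
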